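(* Let $m>0$ and let $U_0=\frac12\ln(1-\frac{2m}{r})$, expressed in Weyl coordinates via $\rho=r\sin\theta\sqrt{1-2m/r}$, $z=(r-m)\cos\theta$ ($r>2m$, $\theta\in[0,\pi]$), and set $x=r/m-1$. Let the body surface be $r=r_0>2m$, i.e. $x_0=r_0/m-1$, so that $z_S=-mx_0$, $z_N=mx_0$. Then for every $y\in(-mx_0,mx_0)$ the unique solution $Z_y$ of $dZ_y=\cos\Upsilon_y\,dU_0+\sin\Upsilon_y\star dU_0$ on the exterior region $x>x_0$ vanishing at infinity is given by $$e^{-Z_y}=\frac{yx-m\cos\theta-\sqrt{m^2x^2+y^2-2mxy\cos\theta-m^2\sin^2\theta}}{(y-m)\sqrt{x^2-1}}$$ (with the limiting value obtained by continuity at $y=m$), and hence $$\Psi_y=\frac{\big(yx-m\cos\theta-\sqrt{m^2x^2+y^2-2mxy\cos\theta-m^2\sin^2\theta}\big)^2}{(y-m)^2(x+1)^2\sqrt{m^2x^2+y^2-2mxy\cos\theta-m^2\sin^2\theta}},\qquad \psi_y=\frac{1}{\sqrt{m^2x^2+y^2-2mxy\cos\theta-m^2\sin^2\theta}}.$$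
   Context: $\mathbb{E}^3$ has cylindrical (Weyl) coordinates $(\rho,z,\phi)$ and flat metric $\gamma=d\rho^2+dz^2+\rho^2d\phi^2$. On the half-plane $\mathbb{K}=\{(\rho,z):\rho\ge0\}$ with metric $d\rho^2+dz^2$, the Hodge star is fixed by $\star d\rho=-dz$, $\star dz=d\rho$. For a constant $y$, $\Upsilon_y\in[0,2\pi)$ is defined by $\cos\Upsilon_y=(z-y)/\sqrt{\rho^2+(z-y)^2}$, $\sin\Upsilon_y=\rho/\sqrt{\rho^2+(z-y)^2}$; $\psi_y=1/\sqrt{\rho^2+(z-y)^2}$ and $\Psi_y=e^{2U_0-2Z_y}/\sqrt{\rho^2+(z-y)^2}$. *)

theory Defs
  imports "HOL-Analysis.Analysis"
begin

text \<open>Points of the Weyl half-plane K are pairs (rho, z) :: real \<times> real.\<close>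

definition weylK :: "(real \<times> real) set" where
  "weylK = {p. fst p \<ge> 0}"

definition weyl_of :: "real \<Rightarrow> real \<Rightarrow> real \<Rightarrow> real \<times> real" where
  "weyl_of m r \<theta> = (r * sin \<theta> * sqrt (1 - 2 * m / r), (r - m) * cos \<theta>)"

text \<open>Inverse coordinate change: the Schwarzschild radius r as a function of (rho, z),
  r = m + (R_+ + R_-)/2 with R_\<pm> = sqrt(rho^2 + (z \<mp> m)^2).\<close>
definition weyl_r :: "real \<Rightarrow> real \<Rightarrow> real \<Rightarrow> real" where
  "weyl_r m \<rho> z = m + (sqrt (\<rho>\<^sup>2 + (z - m)\<^sup>2) + sqrt (\<rho>\<^sup>2 + (z + m)\<^sup>2)) / 2"

definition U0 :: "real \<Rightarrow> real \<times> real \<Rightarrow> real" where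
  "U0 m p = ln (1 - 2 * m / weyl_r m (fst p) (snd p)) / 2"

definition exterior :: "real \<Rightarrow> real \<Rightarrow> (real \<times> real) set" where
  "exterior m r0 = {p. fst p \<ge> 0 \<and> weyl_r m (fst p) (snd p) > r0}"

definition Upsilon :: "real \<Rightarrow> real \<times> real \<Rightarrow> real" where
  "Upsilon y p = (THE t. 0 \<le> t \<and> t < 2 * pi
      \<and> cos t = (snd p - y) / sqrt ((fst p)\<^sup>2 + (snd p - y)\<^sup>2)
      \<and> sin t = fst p / sqrt ((fst p)\<^sup>2 + (snd p - y)\<^sup>2))"

text \<open>Hodge star on 1-forms on K (1-forms = linear functionals on R^2, coordinates (rho,z)):
  star d rho = - dz, star dz = d rho, i.e. star (a d rho + b dz) = b d rho - a dz.\<close>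
definition hodge :: "(real \<times> real \<Rightarrow> real) \<Rightarrow> (real \<times> real \<Rightarrow> real)" where
  "hodge \<omega> = (\<lambda>h. \<omega> (0, 1) * fst h - \<omega> (1, 0) * snd h)"

definition solves_Z :: "real \<Rightarrow> (real \<times> real) set \<Rightarrow> real \<Rightarrow> (real \<times> real \<Rightarrow> real) \<Rightarrow> bool" where
  "solves_Z m D y Z \<longleftrightarrow> (\<forall>p\<in>D. \<exists>dU dZ.
      (U0 m has_derivative dU) (at p within weylK) \<and>
      (Z has_derivative dZ) (at p within weylK) \<and>
      dZ = (\<lambda>h. cos (Upsilon y p) * dU h + sin (Upsilon y p) * hodge dU h))"

definition vanishes_at_infinity :: "(real \<times> real) set \<Rightarrow> (real \<times> real \<Rightarrow> real) \<Rightarrow> bool" where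
  "vanishes_at_infinity D Z \<longleftrightarrow> (\<forall>e>0. \<exists>R. \<forall>p\<in>D. norm p > R \<longrightarrow> \<bar>Z p\<bar> < e)"

definition psi_y :: "real \<Rightarrow> real \<times> real \<Rightarrow> real" where
  "psi_y y p = 1 / sqrt ((fst p)\<^sup>2 + (snd p - y)\<^sup>2)"

definition Psi_y :: "real \<Rightarrow> (real \<times> real \<Rightarrow> real) \<Rightarrow> real \<Rightarrow> real \<times> real \<Rightarrow> real" where
  "Psi_y m Z y p = exp (2 * U0 m p - 2 * Z p) / sqrt ((fst p)\<^sup>2 + (snd p - y)\<^sup>2)"

definition Sroot :: "real \<Rightarrow> real \<Rightarrow> real \<Rightarrow> real \<Rightarrow> real" where
  "Sroot m y x \<theta> = sqrt (m\<^sup>2 * x\<^sup>2 + y\<^sup>2 - 2 * m * x * y * cos \<theta> - m\<^sup>2 * (sin \<theta>)\<^sup>2)"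

definition expmZ_formula :: "real \<Rightarrow> real \<Rightarrow> real \<Rightarrow> real \<Rightarrow> real" where
  "expmZ_formula m y x \<theta> =
     (y * x - m * cos \<theta> - Sroot m y x \<theta>) / ((y - m) * sqrt (x\<^sup>2 - 1))"

definition Psi_formula :: "real \<Rightarrow> real \<Rightarrow> real \<Rightarrow> real \<Rightarrow> real" where
  "Psi_formula m y x \<theta> =
     (y * x - m * cos \<theta> - Sroot m y x \<theta>)\<^sup>2 / ((y - m)\<^sup>2 * (x + 1)\<^sup>2 * Sroot m y x \<theta>)"

end

theory Submission
  imports Defs
begin

definition lin :: "real \<Rightarrow> real \<Rightarrow> real \<times> real \<Rightarrow> real" where
  "lin A B = (\<lambda>h. A * fst h + B * snd h)"

lemma lin_cong: "(f has_derivative lin A B) F \<Longrightarrow> A = A' \<Longrightarrow> B = B' \<Longrightarrow> (f has_derivative lin A' B') F"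
  by simp

lemma lin_add: "(f has_derivative lin A B) F \<Longrightarrow> (g has_derivative lin C D) F \<Longrightarrow>
   ((\<lambda>x. f x + g x) has_derivative lin (A + C) (B + D)) F"
  by (drule (1) has_derivative_add) (simp add: lin_def algebra_simps)

lemma lin_diff: "(f has_derivative lin A B) F \<Longrightarrow> (g has_derivative lin C D) F \<Longrightarrow>
   ((\<lambda>x. f x - g x) has_derivative lin (A - C) (B - D)) F"
  by (drule (1) has_derivative_diff) (simp add: lin_def algebra_simps)

lemma lin_cmult: "(f has_derivative lin A B) F \<Longrightarrow> ((\<lambda>x. c * f x) has_derivative lin (c * A) (c * B)) F"
  unfolding lin_def by (rule derivative_eq_intros | assumption | simp add: algebra_simps fun_eq_iff)+

lemma lin_divc: assumes "(f has_derivative lin A B) F" shows "((\<lambda>x. f x / c) has_derivative lin (A / c) (B / c)) F"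
proof -
  have eq: "\<And>u::real. u / c = inverse c * u" by (simp add: divide_inverse_commute)
  show ?thesis unfolding eq by (rule lin_cmult) fact
qed

lemma lin_comp:
  assumes g: "(g has_real_derivative g') (at (f q))" and f: "(f has_derivative lin A B) (at q)"
  shows "((\<lambda>x. g (f x)) has_derivative lin (g' * A) (g' * B)) (at q)"
proof -
  have "(g has_derivative (\<lambda>x. g' * x)) (at (f q))" using g by (simp add: has_field_derivative_def)
  from has_derivative_compose[OF f this] show ?thesis by (simp add: lin_def algebra_simps)
qed

lemma lin_fst: "((\<lambda>p. fst p) has_derivative lin 1 0) F"
proof -
  have e: "lin 1 0 = (\<lambda>h::real\<times>real. fst h)" by (simp add: lin_def fun_eq_iff)
  show ?thesis unfolding e by (rule has_derivative_fst[OF has_derivative_ident])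
qed

lemma lin_snd: "((\<lambda>p. snd p) has_derivative lin 0 1) F"
proof -
  have e: "lin 0 1 = (\<lambda>h::real\<times>real. snd h)" by (simp add: lin_def fun_eq_iff)
  show ?thesis unfolding e by (rule has_derivative_snd[OF has_derivative_ident])
qed

lemma lin_const: "((\<lambda>p. c) has_derivative lin 0 0) F"
proof -
  have e: "lin 0 0 = (\<lambda>h::real\<times>real. 0::real)" by (simp add: lin_def fun_eq_iff)
  show ?thesis unfolding e by (rule has_derivative_const)
qed

lemma lin_mult:
  assumes "(f has_derivative lin A B) (at q within S)" "(g has_derivative lin C D) (at q within S)"
  shows "((\<lambda>x. f x * g x) has_derivative lin (f q * C + A * g q) (f q * D + B * g q)) (at q within S)"
proof -
  have e: "(\<lambda>h. f q * lin C D h + lin A B h * g q) = lin (f q * C + A * g q) (f q * D + B * g q)"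
    by (simp add: lin_def fun_eq_iff algebra_simps)
  show ?thesis using has_derivative_mult[OF assms] unfolding e .
qed

lemma lin_sq: "((\<lambda>p. (fst p)\<^sup>2 + (snd p - c)\<^sup>2) has_derivative lin (2 * fst q) (2 * (snd q - c))) (at q)"
proof -
  have a: "((\<lambda>p. snd p - c) has_derivative lin 0 1) (at q)" using lin_diff[OF lin_snd lin_const] by simp
  have "((\<lambda>p. fst p * fst p + (snd p - c) * (snd p - c)) has_derivative
     lin ((fst q * 1 + 1 * fst q) + ((snd q - c) * 0 + 0 * (snd q - c))) ((fst q * 0 + 0 * fst q) + ((snd q - c) * 1 + 1 * (snd q - c)))) (at q)"
    by (rule lin_add[OF lin_mult[OF lin_fst lin_fst] lin_mult[OF a a]])
  then show ?thesis by (simp add: power2_eq_square algebra_simps)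
qed

lemma aux_inv2: "inverse (s::real) / 2 * (2 * u) = u / s"
  by (cases "s = 0") (simp_all add: field_simps)

lemma lin_sqrt:
  assumes "(fst q)\<^sup>2 + (snd q - c)\<^sup>2 > 0"
  shows "((\<lambda>p. sqrt ((fst p)\<^sup>2 + (snd p - c)\<^sup>2)) has_derivative
     lin (fst q / sqrt ((fst q)\<^sup>2 + (snd q - c)\<^sup>2)) ((snd q - c) / sqrt ((fst q)\<^sup>2 + (snd q - c)\<^sup>2))) (at q)"
proof -
  have "(sqrt has_real_derivative inverse (sqrt ((fst q)\<^sup>2 + (snd q - c)\<^sup>2)) / 2) (at ((fst q)\<^sup>2 + (snd q - c)\<^sup>2))"
    using assms by (rule DERIV_real_sqrt)
  note X = lin_comp[OF this lin_sq]
  have s0: "sqrt ((fst q)\<^sup>2 + (snd q - c)\<^sup>2) > 0" using assms by simp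
  show ?thesis using X unfolding aux_inv2 .
qed

definition R1 :: "real \<Rightarrow> real \<times> real \<Rightarrow> real" where
  "R1 c p = sqrt ((fst p)\<^sup>2 + (snd p - c)\<^sup>2)"
definition R2 :: "real \<Rightarrow> real \<times> real \<Rightarrow> real" where
  "R2 c p = sqrt ((fst p)\<^sup>2 + (snd p + c)\<^sup>2)"
definition sg :: "real \<Rightarrow> real \<times> real \<Rightarrow> real" where
  "sg m p = (R1 m p + R2 m p) / 2"
definition dl :: "real \<Rightarrow> real \<times> real \<Rightarrow> real" where
  "dl m p = (R2 m p - R1 m p) / 2"
definition Nf :: "real \<Rightarrow> real \<Rightarrow> real \<times> real \<Rightarrow> real" where
  "Nf m y p = y * sg m p - m * dl m p - m * R1 y p"
definition hU :: "real \<Rightarrow> real \<Rightarrow> real" where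
  "hU m s = ln (1 - 2 * m / (m + s)) / 2"
definition hk :: "real \<Rightarrow> real \<Rightarrow> real" where
  "hk m s = ln (s\<^sup>2 - m\<^sup>2) / 2"
definition Zs :: "real \<Rightarrow> real \<Rightarrow> real \<times> real \<Rightarrow> real" where
  "Zs m y p = (if y = m then ln (R1 m p) - hk m (sg m p) else hk m (sg m p) - ln (Nf m y p / (y - m)))"

lemma U0_eq: "U0 m = (\<lambda>p. hU m (sg m p))"
  by (simp add: fun_eq_iff U0_def hU_def sg_def weyl_r_def R1_def R2_def)

lemma R1_pos_iff: "R1 c p > 0 \<longleftrightarrow> (fst p)\<^sup>2 + (snd p - c)\<^sup>2 > 0"
  by (simp add: R1_def)

lemma dR1: assumes "R1 c q > 0"
  shows "(R1 c has_derivative lin (fst q / R1 c q) ((snd q - c) / R1 c q)) (at q)"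
proof -
  have "(fst q)\<^sup>2 + (snd q - c)\<^sup>2 > 0" using assms R1_pos_iff by blast
  from lin_sqrt[OF this] show ?thesis unfolding R1_def[abs_def] by simp
qed

lemma dR2: assumes "R2 c q > 0"
  shows "(R2 c has_derivative lin (fst q / R2 c q) ((snd q + c) / R2 c q)) (at q)"
proof -
  have "(fst q)\<^sup>2 + (snd q - (-c))\<^sup>2 > 0" using assms by (simp add: R2_def)
  from lin_sqrt[OF this] show ?thesis unfolding R2_def[abs_def] by simp
qed

lemma dsg: assumes "R1 m q > 0" "R2 m q > 0"
  shows "(sg m has_derivative lin ((fst q / R1 m q + fst q / R2 m q) / 2)
      (((snd q - m) / R1 m q + (snd q + m) / R2 m q) / 2)) (at q)"
  unfolding sg_def[abs_def] by (rule lin_divc[OF lin_add[OF dR1[OF assms(1)] dR2[OF assms(2)]]])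

lemma ddl: assumes "R1 m q > 0" "R2 m q > 0"
  shows "(dl m has_derivative lin ((fst q / R2 m q - fst q / R1 m q) / 2)
      (((snd q + m) / R2 m q - (snd q - m) / R1 m q) / 2)) (at q)"
  unfolding dl_def[abs_def] by (rule lin_divc[OF lin_diff[OF dR2[OF assms(2)] dR1[OF assms(1)]]])

lemma dN: assumes "R1 m q > 0" "R2 m q > 0" "R1 y q > 0"
  shows "(Nf m y has_derivative lin
     (y * ((fst q / R1 m q + fst q / R2 m q) / 2) - m * ((fst q / R2 m q - fst q / R1 m q) / 2) - m * (fst q / R1 y q))
     (y * (((snd q - m) / R1 m q + (snd q + m) / R2 m q) / 2) - m * (((snd q + m) / R2 m q - (snd q - m) / R1 m q) / 2) - m * ((snd q - y) / R1 y q))) (at q)"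
  unfolding Nf_def[abs_def]
  by (rule lin_diff[OF lin_diff[OF lin_cmult[OF dsg[OF assms(1,2)]] lin_cmult[OF ddl[OF assms(1,2)]]] lin_cmult[OF dR1[OF assms(3)]]])

lemma DhU: assumes "m > 0" "s > m" shows "(hU m has_real_derivative m / (s\<^sup>2 - m\<^sup>2)) (at s)"
proof -
  have p: "1 - 2 * m / (m + s) > 0" using assms by (simp add: field_simps)
  have "((\<lambda>s. 1 - 2 * m / (m + s)) has_real_derivative 2 * m / (m + s)\<^sup>2) (at s)"
    using assms by (auto intro!: derivative_eq_intros simp: power2_eq_square field_simps)
  from DERIV_ln[OF p] this have "((\<lambda>s. ln (1 - 2 * m / (m + s))) has_real_derivative inverse (1 - 2 * m / (m + s)) * (2 * m / (m + s)\<^sup>2)) (at s)"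
    by (rule DERIV_chain2)
  hence "((\<lambda>s. ln (1 - 2 * m / (m + s)) / 2) has_real_derivative inverse (1 - 2 * m / (m + s)) * (2 * m / (m + s)\<^sup>2) / 2) (at s)"
    by (rule DERIV_cdivide)
  moreover have "inverse (1 - 2 * m / (m + s)) * (2 * m / (m + s)\<^sup>2) / 2 = m / (s\<^sup>2 - m\<^sup>2)"
  proof -
    have a: "s - m > 0" "s + m > 0" "m + s > 0" using assms by auto
    have e1: "1 - 2 * m / (m + s) = (s - m) / (s + m)" using a by (simp add: field_simps)
    have e2: "s\<^sup>2 - m\<^sup>2 = (s - m) * (s + m)" by (simp add: power2_eq_square algebra_simps)
    have g: "\<And>u v. u > 0 \<Longrightarrow> v > 0 \<Longrightarrow> inverse (u / v) * (2 * m / (v * v)) / 2 = m / (u * v)"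
      by (simp add: field_simps)
    have e3: "(m + s)\<^sup>2 = (s + m) * (s + m)" by (simp add: power2_eq_square algebra_simps)
    show ?thesis unfolding e1 e2 e3 by (rule g) (use a in auto)
  qed
  ultimately show ?thesis unfolding hU_def[abs_def] by simp
qed

lemma Dhk: assumes "m > 0" "s > m" shows "(hk m has_real_derivative s / (s\<^sup>2 - m\<^sup>2)) (at s)"
proof -
  have p: "s\<^sup>2 - m\<^sup>2 > 0" using assms by (simp add: power_strict_mono)
  have "((\<lambda>s. s\<^sup>2 - m\<^sup>2) has_real_derivative 2 * s) (at s)"
    by (auto intro!: derivative_eq_intros)
  from DERIV_ln[OF p] this have "((\<lambda>s. ln (s\<^sup>2 - m\<^sup>2)) has_real_derivative inverse (s\<^sup>2 - m\<^sup>2) * (2 * s)) (at s)"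
    by (rule DERIV_chain2)
  hence "((\<lambda>s. ln (s\<^sup>2 - m\<^sup>2) / 2) has_real_derivative inverse (s\<^sup>2 - m\<^sup>2) * (2 * s) / 2) (at s)"
    by (rule DERIV_cdivide)
  moreover have "inverse (s\<^sup>2 - m\<^sup>2) * (2 * s) / 2 = s / (s\<^sup>2 - m\<^sup>2)"
    using p by (simp add: field_simps)
  ultimately show ?thesis unfolding hk_def[abs_def] by simp
qed

lemma Dlndiv: assumes "t / c > 0" shows "((\<lambda>t. ln (t / c)) has_real_derivative 1 / t) (at t)"
proof -
  have c: "c \<noteq> 0" "t \<noteq> 0"
  proof -
    show "c \<noteq> 0" proof assume "c = 0" with assms show False by simp qed
    show "t \<noteq> 0" proof assume "t = 0" with assms show False by simp qed
  qed
  have "((\<lambda>t. t / c) has_real_derivative 1 / c) (at t)" using c by (auto intro!: derivative_eq_intros)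
  from DERIV_ln[OF assms] this have "((\<lambda>t. ln (t / c)) has_real_derivative inverse (t / c) * (1 / c)) (at t)"
    by (rule DERIV_chain2)
  moreover have "inverse (t / c) * (1 / c) = 1 / t" using c by (simp add: field_simps)
  ultimately show ?thesis by simp
qed

lemma Dln: assumes "t > 0" shows "(ln has_real_derivative 1 / t) (at t)"
  using DERIV_ln[OF assms] by (simp add: divide_inverse)

lemma geom_setup:
  fixes a b \<rho> z m :: real
  assumes a: "a\<^sup>2 = \<rho>\<^sup>2 + (z-m)\<^sup>2" and b: "b\<^sup>2 = \<rho>\<^sup>2 + (z+m)\<^sup>2"
  and pos: "a > 0" "b > 0" "m > 0"
  and sg: "\<sigma> = (a+b)/2" and dl: "\<delta> = (b-a)/2"
  shows "z = \<sigma>*\<delta>/m" "a = \<sigma> - \<delta>" "b = \<sigma> + \<delta>"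
    "\<rho>\<^sup>2 = ((\<sigma>\<^sup>2-m\<^sup>2)*(m\<^sup>2-\<delta>\<^sup>2))/m\<^sup>2"
    "\<rho>/a + \<rho>/b = 2*\<rho>*\<sigma>/((\<sigma>-\<delta>)*(\<sigma>+\<delta>))"
    "\<rho>/b - \<rho>/a = -2*\<rho>*\<delta>/((\<sigma>-\<delta>)*(\<sigma>+\<delta>))"
    "(z-m)/a + (z+m)/b = 2*\<delta>*(\<sigma>\<^sup>2-m\<^sup>2)/(m*((\<sigma>-\<delta>)*(\<sigma>+\<delta>)))"
    "(z+m)/b - (z-m)/a = 2*\<sigma>*(m\<^sup>2-\<delta>\<^sup>2)/(m*((\<sigma>-\<delta>)*(\<sigma>+\<delta>)))"
proof -
  show z: "z = \<sigma>*\<delta>/m" using a b pos unfolding sg dl by (simp add: field_simps power2_eq_square)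
  show ae: "a = \<sigma> - \<delta>" "b = \<sigma> + \<delta>" unfolding sg dl by (simp_all add: field_simps)
  have "\<rho>\<^sup>2 = (\<sigma> - \<delta>)\<^sup>2 - (\<sigma>*\<delta>/m - m)\<^sup>2" using a unfolding ae(1) z by simp
  also have "\<dots> = ((\<sigma>\<^sup>2-m\<^sup>2)*(m\<^sup>2-\<delta>\<^sup>2))/m\<^sup>2" using pos by (simp add: field_simps power2_eq_square)
  finally show "\<rho>\<^sup>2 = ((\<sigma>\<^sup>2-m\<^sup>2)*(m\<^sup>2-\<delta>\<^sup>2))/m\<^sup>2" .
  have ab: "\<sigma> - \<delta> > 0" "\<sigma> + \<delta> > 0" using pos ae by auto
  show "\<rho>/a + \<rho>/b = 2*\<rho>*\<sigma>/((\<sigma>-\<delta>)*(\<sigma>+\<delta>))" unfolding ae using ab by (simp add: field_simps)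
  show "\<rho>/b - \<rho>/a = -2*\<rho>*\<delta>/((\<sigma>-\<delta>)*(\<sigma>+\<delta>))" unfolding ae using ab by (simp add: field_simps)
  have s3a: "(z-m)*b + (z+m)*a = 2*\<delta>*(\<sigma>\<^sup>2-m\<^sup>2)/m" unfolding ae z using pos by (simp add: field_simps power2_eq_square)
  have s4a: "(z+m)*a - (z-m)*b = 2*\<sigma>*(m\<^sup>2-\<delta>\<^sup>2)/m" unfolding ae z using pos by (simp add: field_simps power2_eq_square)
  have Pab: "(\<sigma>-\<delta>)*(\<sigma>+\<delta>) = a*b" unfolding ae by simp
  have "(z-m)/a + (z+m)/b = ((z-m)*b + (z+m)*a)/(a*b)" using pos by (simp add: field_simps)
  thus "(z-m)/a + (z+m)/b = 2*\<delta>*(\<sigma>\<^sup>2-m\<^sup>2)/(m*((\<sigma>-\<delta>)*(\<sigma>+\<delta>)))" unfolding s3a Pab by simp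
  have "(z+m)/b - (z-m)/a = ((z+m)*a - (z-m)*b)/(a*b)" using pos by (simp add: field_simps)
  thus "(z+m)/b - (z-m)/a = 2*\<sigma>*(m\<^sup>2-\<delta>\<^sup>2)/(m*((\<sigma>-\<delta>)*(\<sigma>+\<delta>)))" unfolding s4a Pab by simp
qed

lemma idrho:
  fixes a b d \<rho> z m y :: real
  assumes a: "a\<^sup>2 = \<rho>\<^sup>2 + (z-m)\<^sup>2" and b: "b\<^sup>2 = \<rho>\<^sup>2 + (z+m)\<^sup>2" and d: "d\<^sup>2 = \<rho>\<^sup>2 + (z-y)\<^sup>2"
  and pos: "a > 0" "b > 0" "d > 0" "m > 0"
  and sg: "\<sigma> = (a+b)/2" and dl: "\<delta> = (b-a)/2" and sm: "\<sigma>\<^sup>2 - m\<^sup>2 \<noteq> 0"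
  and N: "N = y*\<sigma> - m*\<delta> - m*d" and N0: "N \<noteq> 0"
  shows "\<sigma> / (\<sigma>\<^sup>2 - m\<^sup>2) * ((\<rho>/a + \<rho>/b)/2) - 1 / N * (y*((\<rho>/a + \<rho>/b)/2) - m*((\<rho>/b - \<rho>/a)/2) - m*(\<rho>/d))
     = (z-y)/d * (m/(\<sigma>\<^sup>2-m\<^sup>2) * ((\<rho>/a + \<rho>/b)/2)) + \<rho>/d * (m/(\<sigma>\<^sup>2-m\<^sup>2) * (((z-m)/a + (z+m)/b)/2))"
    and "\<sigma> / (\<sigma>\<^sup>2 - m\<^sup>2) * (((z-m)/a + (z+m)/b)/2) - 1 / N * (y*(((z-m)/a + (z+m)/b)/2) - m*(((z+m)/b - (z-m)/a)/2) - m*((z-y)/d))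
     = (z-y)/d * (m/(\<sigma>\<^sup>2-m\<^sup>2) * (((z-m)/a + (z+m)/b)/2)) - \<rho>/d * (m/(\<sigma>\<^sup>2-m\<^sup>2) * ((\<rho>/a + \<rho>/b)/2))"
proof -
  note G = geom_setup[OF a b pos(1,2,4) sg dl]
  note z = G(1)
  have ab: "\<sigma> - \<delta> > 0" "\<sigma> + \<delta> > 0" using pos G(2,3) by auto
  have "d\<^sup>2 = ((\<sigma>\<^sup>2-m\<^sup>2)*(m\<^sup>2-\<delta>\<^sup>2))/m\<^sup>2 + (\<sigma>*\<delta>/m - y)\<^sup>2" using d unfolding G(4) z by simp
  also have "\<dots> = \<sigma>\<^sup>2+\<delta>\<^sup>2+y\<^sup>2-m\<^sup>2-2*\<sigma>*\<delta>*y/m" using pos by (simp add: field_simps power2_eq_square)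
  finally have dd: "d\<^sup>2 = \<sigma>\<^sup>2+\<delta>\<^sup>2+y\<^sup>2-m\<^sup>2-2*\<sigma>*\<delta>*y/m" .
  have dd2: "d*d*m = (\<sigma>\<^sup>2+\<delta>\<^sup>2+y\<^sup>2-m\<^sup>2)*m-2*\<sigma>*\<delta>*y" using dd pos by (simp add: field_simps power2_eq_square)
  define Q where "Q = \<sigma>\<^sup>2 - m\<^sup>2"
  define P where "P = (\<sigma>-\<delta>)*(\<sigma>+\<delta>)"
  have Q0: "Q \<noteq> 0" using sm Q_def by simp
  have P0: "P > 0" using ab P_def by simp
  have rr: "\<rho>\<^sup>2 = Q*(m\<^sup>2-\<delta>\<^sup>2)/m\<^sup>2" using G(4) Q_def by simp
  have s1: "\<rho>/a + \<rho>/b = 2*\<rho>*\<sigma>/P" using G(5) P_def by simp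
  have s2: "\<rho>/b - \<rho>/a = -2*\<rho>*\<delta>/P" using G(6) P_def by simp
  have s3: "(z-m)/a + (z+m)/b = 2*\<delta>*Q/(m*P)" using G(7) P_def Q_def by simp
  have s4: "(z+m)/b - (z-m)/a = 2*\<sigma>*(m\<^sup>2-\<delta>\<^sup>2)/(m*P)" using G(8) P_def by simp
  have key: "\<sigma>\<^sup>2 * N * d - (\<sigma>\<^sup>2-m\<^sup>2)*((y*\<sigma>+m*\<delta>)*d - m*((\<sigma>-\<delta>)*(\<sigma>+\<delta>))) = N*(2*\<sigma>\<^sup>2*\<delta> - y*m*\<sigma> - m\<^sup>2*\<delta>)"
    unfolding N using dd2 by algebra
  have key1: "\<sigma>\<^sup>2 * N * d - Q*((y*\<sigma>+m*\<delta>)*d - m*P) = N*(2*\<sigma>\<^sup>2*\<delta> - y*m*\<sigma> - m\<^sup>2*\<delta>)"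
    using key unfolding Q_def P_def .
  have keyz: "\<sigma>*\<delta>*N*d - y*\<delta>*(\<sigma>\<^sup>2-m\<^sup>2)*d + m*\<sigma>*(m\<^sup>2-\<delta>\<^sup>2)*d + m*(\<sigma>*\<delta> - m*y)*((\<sigma>-\<delta>)*(\<sigma>+\<delta>)) = N*(2*\<sigma>*\<delta>\<^sup>2 - y*m*\<delta> - m\<^sup>2*\<sigma>)"
    unfolding N using dd2 by algebra
  have key2: "\<sigma>*\<delta>*N*d - y*\<delta>*Q*d + m*\<sigma>*(m\<^sup>2-\<delta>\<^sup>2)*d + m*(\<sigma>*\<delta> - m*y)*P = N*(2*\<sigma>*\<delta>\<^sup>2 - y*m*\<delta> - m\<^sup>2*\<sigma>)"
    using keyz unfolding Q_def P_def .
  have L: "\<sigma> / Q * ((\<rho>/a + \<rho>/b)/2) - 1 / N * (y*((\<rho>/a + \<rho>/b)/2) - m*((\<rho>/b - \<rho>/a)/2) - m*(\<rho>/d))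
     = \<rho> * (\<sigma>\<^sup>2 * N * d - Q*((y*\<sigma>+m*\<delta>)*d - m*P)) / (Q*P*N*d)"
    unfolding s1 s2 using pos Q0 N0 P0 by (simp add: field_simps power2_eq_square)
  have R: "(z-y)/d * (m/Q * ((\<rho>/a + \<rho>/b)/2)) + \<rho>/d * (m/Q * (((z-m)/a + (z+m)/b)/2))
     = \<rho> * (N*(2*\<sigma>\<^sup>2*\<delta> - y*m*\<sigma> - m\<^sup>2*\<delta>)) / (Q*P*N*d)"
    unfolding s1 s3 unfolding z using pos Q0 N0 P0 by (simp add: field_simps power2_eq_square) (simp add: Q_def power2_eq_square algebra_simps)
  show "\<sigma> / (\<sigma>\<^sup>2 - m\<^sup>2) * ((\<rho>/a + \<rho>/b)/2) - 1 / N * (y*((\<rho>/a + \<rho>/b)/2) - m*((\<rho>/b - \<rho>/a)/2) - m*(\<rho>/d))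
     = (z-y)/d * (m/(\<sigma>\<^sup>2-m\<^sup>2) * ((\<rho>/a + \<rho>/b)/2)) + \<rho>/d * (m/(\<sigma>\<^sup>2-m\<^sup>2) * (((z-m)/a + (z+m)/b)/2))"
    using L R key1 unfolding Q_def by simp
  have L2: "\<sigma> / Q * (((z-m)/a + (z+m)/b)/2) - 1 / N * (y*(((z-m)/a + (z+m)/b)/2) - m*(((z+m)/b - (z-m)/a)/2) - m*((z-y)/d))
     = (\<sigma>*\<delta>*N*d - y*\<delta>*Q*d + m*\<sigma>*(m\<^sup>2-\<delta>\<^sup>2)*d + m*(\<sigma>*\<delta> - m*y)*P) / (m*P*N*d)"
    unfolding s3 s4 unfolding z using pos Q0 N0 P0 by (simp add: field_simps power2_eq_square)
  have R2: "(z-y)/d * (m/Q * (((z-m)/a + (z+m)/b)/2)) - \<rho>/d * (m/Q * ((\<rho>/a + \<rho>/b)/2))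
     = (N*(2*\<sigma>*\<delta>\<^sup>2 - y*m*\<delta> - m\<^sup>2*\<sigma>)) / (m*P*N*d)"
  proof -
    have "\<rho>/d * (m/Q * ((\<rho>/a + \<rho>/b)/2)) = \<rho>\<^sup>2 * m * \<sigma> / (d * Q * P)"
      unfolding s1 using pos Q0 P0 by (simp add: field_simps power2_eq_square)
    also have "\<dots> = \<sigma> * (m\<^sup>2-\<delta>\<^sup>2) / (m * d * P)" unfolding rr using pos Q0 P0 by (simp add: field_simps power2_eq_square)
    finally have e: "\<rho>/d * (m/Q * ((\<rho>/a + \<rho>/b)/2)) = \<sigma> * (m\<^sup>2-\<delta>\<^sup>2) / (m * d * P)" .
    show ?thesis unfolding e s3 unfolding z using pos Q0 N0 P0 by (simp add: field_simps power2_eq_square)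
  qed
  show "\<sigma> / (\<sigma>\<^sup>2 - m\<^sup>2) * (((z-m)/a + (z+m)/b)/2) - 1 / N * (y*(((z-m)/a + (z+m)/b)/2) - m*(((z+m)/b - (z-m)/a)/2) - m*((z-y)/d))
     = (z-y)/d * (m/(\<sigma>\<^sup>2-m\<^sup>2) * (((z-m)/a + (z+m)/b)/2)) - \<rho>/d * (m/(\<sigma>\<^sup>2-m\<^sup>2) * ((\<rho>/a + \<rho>/b)/2))"
    using L2 R2 key2 unfolding Q_def by simp
qed

lemma aux1: "(a::real) \<noteq> 0 \<Longrightarrow> u \<noteq> 0 \<Longrightarrow> 1/a*(r/a) = r*u\<^sup>2/(a*u)\<^sup>2"
  by (simp add: field_simps power2_eq_square)
lemma aux2: "(a::real) \<noteq> 0 \<Longrightarrow> u \<noteq> 0 \<Longrightarrow> r/a = r*u/(a*u)"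
  by (simp add: field_simps power2_eq_square)

lemma idm:
  fixes a b \<rho> z m :: real
  assumes a: "a\<^sup>2 = \<rho>\<^sup>2 + (z-m)\<^sup>2" and b: "b\<^sup>2 = \<rho>\<^sup>2 + (z+m)\<^sup>2"
  and pos: "a > 0" "b > 0" "m > 0"
  and sg: "\<sigma> = (a+b)/2" and dl: "\<delta> = (b-a)/2" and sm: "\<sigma>\<^sup>2 - m\<^sup>2 \<noteq> 0"
  shows "1 / a * (\<rho>/a) - \<sigma> / (\<sigma>\<^sup>2 - m\<^sup>2) * ((\<rho>/a + \<rho>/b)/2)
     = (z-m)/a * (m/(\<sigma>\<^sup>2-m\<^sup>2) * ((\<rho>/a + \<rho>/b)/2)) + \<rho>/a * (m/(\<sigma>\<^sup>2-m\<^sup>2) * (((z-m)/a + (z+m)/b)/2))"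
    and "1 / a * ((z-m)/a) - \<sigma> / (\<sigma>\<^sup>2 - m\<^sup>2) * (((z-m)/a + (z+m)/b)/2)
     = (z-m)/a * (m/(\<sigma>\<^sup>2-m\<^sup>2) * (((z-m)/a + (z+m)/b)/2)) - \<rho>/a * (m/(\<sigma>\<^sup>2-m\<^sup>2) * ((\<rho>/a + \<rho>/b)/2))"
proof -
  note G = geom_setup[OF a b pos sg dl]
  note z = G(1)
  have ab: "\<sigma> - \<delta> > 0" "\<sigma> + \<delta> > 0" using pos G(2,3) by auto
  define Q where "Q = \<sigma>\<^sup>2 - m\<^sup>2"
  define P where "P = (\<sigma>-\<delta>)*(\<sigma>+\<delta>)"
  have Q0: "Q \<noteq> 0" using sm Q_def by simp
  have P0: "P > 0" using ab P_def by simp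
  have rr: "\<rho>\<^sup>2 = Q*(m\<^sup>2-\<delta>\<^sup>2)/m\<^sup>2" using G(4) Q_def by simp
  have s1: "\<rho>/a + \<rho>/b = 2*\<rho>*\<sigma>/P" using G(5) P_def by simp
  have s3: "(z-m)/a + (z+m)/b = 2*\<delta>*Q/(m*P)" using G(7) P_def Q_def by simp
  have aP: "a * (\<sigma> + \<delta>) = P" unfolding P_def G(2) by simp
  have e1: "1 / a * (\<rho>/a) = \<rho> * (\<sigma>+\<delta>)\<^sup>2 / P\<^sup>2" unfolding aP[symmetric] by (rule aux1) (use pos ab in auto)
  have e2: "1 / a * ((z-m)/a) = (z-m) * (\<sigma>+\<delta>)\<^sup>2 / P\<^sup>2" unfolding aP[symmetric] by (rule aux1) (use pos ab in auto)
  have e3: "\<rho>/a = \<rho> * (\<sigma>+\<delta>) / P" unfolding aP[symmetric] by (rule aux2) (use pos ab in auto)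
  have e4: "(z-m)/a = (z-m) * (\<sigma>+\<delta>) / P" unfolding aP[symmetric] by (rule aux2) (use pos ab in auto)
  have PP: "P = \<sigma>\<^sup>2 - \<delta>\<^sup>2" unfolding P_def by (simp add: power2_eq_square algebra_simps)
  have QQ: "Q = \<sigma>\<^sup>2 - m\<^sup>2" by (fact Q_def)
  have "1 / a * (\<rho>/a) - \<sigma> / Q * ((\<rho>/a + \<rho>/b)/2)
     = (z-m)/a * (m/Q * ((\<rho>/a + \<rho>/b)/2)) + \<rho>/a * (m/Q * (((z-m)/a + (z+m)/b)/2))"
  proof -
    have "1 / a * (\<rho>/a) - \<sigma> / Q * ((\<rho>/a + \<rho>/b)/2) = \<rho> * ((\<sigma>+\<delta>)\<^sup>2 * Q - \<sigma>\<^sup>2 * P) / (P\<^sup>2 * Q)"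
      unfolding e1 s1 using P0 Q0 by (simp add: field_simps power2_eq_square)
    moreover have "(z-m)/a * (m/Q * ((\<rho>/a + \<rho>/b)/2)) + \<rho>/a * (m/Q * (((z-m)/a + (z+m)/b)/2))
       = \<rho> * ((\<sigma>+\<delta>) * (\<sigma>*\<delta> - m\<^sup>2) * \<sigma> + (\<sigma>+\<delta>) * \<delta> * Q) / (P\<^sup>2 * Q)"
      unfolding s1 s3 unfolding e3 e4 unfolding z using P0 Q0 pos by (simp add: field_simps power2_eq_square)
    moreover have "(\<sigma>+\<delta>)\<^sup>2 * Q - \<sigma>\<^sup>2 * P = (\<sigma>+\<delta>) * (\<sigma>*\<delta> - m\<^sup>2) * \<sigma> + (\<sigma>+\<delta>) * \<delta> * Q"
      unfolding PP QQ by (simp add: power2_eq_square algebra_simps)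
    ultimately show ?thesis by simp
  qed
  then show "1 / a * (\<rho>/a) - \<sigma> / (\<sigma>\<^sup>2 - m\<^sup>2) * ((\<rho>/a + \<rho>/b)/2)
     = (z-m)/a * (m/(\<sigma>\<^sup>2-m\<^sup>2) * ((\<rho>/a + \<rho>/b)/2)) + \<rho>/a * (m/(\<sigma>\<^sup>2-m\<^sup>2) * (((z-m)/a + (z+m)/b)/2))"
    unfolding Q_def .
  have "1 / a * ((z-m)/a) - \<sigma> / Q * (((z-m)/a + (z+m)/b)/2)
     = (z-m)/a * (m/Q * (((z-m)/a + (z+m)/b)/2)) - \<rho>/a * (m/Q * ((\<rho>/a + \<rho>/b)/2))"
  proof -
    have "1 / a * ((z-m)/a) - \<sigma> / Q * (((z-m)/a + (z+m)/b)/2) = ((\<sigma>*\<delta> - m\<^sup>2) * (\<sigma>+\<delta>)\<^sup>2 - \<sigma> * \<delta> * P) / (m * P\<^sup>2)"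
      unfolding e2 s3 unfolding z using P0 Q0 pos by (simp add: field_simps power2_eq_square)
    moreover have "\<rho>/a * (m/Q * ((\<rho>/a + \<rho>/b)/2)) = \<rho>\<^sup>2 * (\<sigma>+\<delta>) * m * \<sigma> / (P\<^sup>2 * Q)"
      unfolding s1 unfolding e3 using P0 Q0 pos by (simp add: field_simps power2_eq_square)
    moreover have "\<dots> = (m\<^sup>2-\<delta>\<^sup>2) * (\<sigma>+\<delta>) * \<sigma> / (m * P\<^sup>2)"
      unfolding rr using P0 Q0 pos by (simp add: field_simps power2_eq_square)
    moreover have "(z-m)/a * (m/Q * (((z-m)/a + (z+m)/b)/2)) = (\<sigma>*\<delta> - m\<^sup>2) * (\<sigma>+\<delta>) * \<delta> / (m * P\<^sup>2)"
      unfolding s3 unfolding e4 unfolding z using P0 Q0 pos by (simp add: field_simps power2_eq_square)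
    moreover have "(\<sigma>*\<delta> - m\<^sup>2) * (\<sigma>+\<delta>)\<^sup>2 - \<sigma> * \<delta> * P = (\<sigma>*\<delta> - m\<^sup>2) * (\<sigma>+\<delta>) * \<delta> - (m\<^sup>2-\<delta>\<^sup>2) * (\<sigma>+\<delta>) * \<sigma>"
      unfolding PP by (simp add: power2_eq_square algebra_simps)
    ultimately show ?thesis using P0 pos by (simp add: diff_divide_distrib)
  qed
  then show "1 / a * ((z-m)/a) - \<sigma> / (\<sigma>\<^sup>2 - m\<^sup>2) * (((z-m)/a + (z+m)/b)/2)
     = (z-m)/a * (m/(\<sigma>\<^sup>2-m\<^sup>2) * (((z-m)/a + (z+m)/b)/2)) - \<rho>/a * (m/(\<sigma>\<^sup>2-m\<^sup>2) * ((\<rho>/a + \<rho>/b)/2))"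
    unfolding Q_def .
qed

lemma Upsilon_eq:
  assumes D: "sqrt ((fst p)\<^sup>2 + (snd p - y)\<^sup>2) > 0"
  shows "cos (Upsilon y p) = (snd p - y) / sqrt ((fst p)\<^sup>2 + (snd p - y)\<^sup>2)
       \<and> sin (Upsilon y p) = fst p / sqrt ((fst p)\<^sup>2 + (snd p - y)\<^sup>2)"
proof -
  define D where "D = sqrt ((fst p)\<^sup>2 + (snd p - y)\<^sup>2)"
  have D0: "D > 0" using D D_def by simp
  have DD: "D\<^sup>2 = (fst p)\<^sup>2 + (snd p - y)\<^sup>2" unfolding D_def by simp
  have "((snd p - y) / D)\<^sup>2 + (fst p / D)\<^sup>2 = 1" using D0 DD by (simp add: field_simps power2_eq_square)
  then obtain t where t: "0 \<le> t" "t < 2*pi" "(snd p - y) / D = cos t" "fst p / D = sin t"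
    by (rule sincos_total_2pi)
  have uniq: "u = t" if u: "0 \<le> u" "u < 2*pi" "cos u = (snd p - y) / D" "sin u = fst p / D" for u
  proof -
    have "sin u = sin t \<and> cos u = cos t" using t u by simp
    then obtain n :: int where n: "u = t + 2 * pi * n" using sin_cos_eq_iff by blast
    have a: "2 * pi * real_of_int n < 2 * pi * 1" "2 * pi * (-1) < 2 * pi * real_of_int n" using n t u by linarith+
    have "real_of_int n < 1" using a(1) pi_gt_zero by (simp add: mult_less_cancel_left)
    moreover have "-1 < real_of_int n"
    proof -
      have "2 * pi * (-1) < 2 * pi * real_of_int n" by (fact a(2))
      moreover have c: "0 < 2*pi" by simp
      ultimately show ?thesis using mult_less_cancel_left_pos[OF c, of "-1" "real_of_int n"] by blast
    qed
    ultimately have "n < 1" "-1 < n" by linarith+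
    hence "n = 0" by simp
    thus ?thesis using n by simp
  qed
  have ex1: "\<exists>!u. 0 \<le> u \<and> u < 2 * pi \<and> cos u = (snd p - y) / D \<and> sin u = fst p / D"
  proof (rule ex1I[of _ t])
    show "0 \<le> t \<and> t < 2 * pi \<and> cos t = (snd p - y) / D \<and> sin t = fst p / D" using t by simp
    fix u assume "0 \<le> u \<and> u < 2 * pi \<and> cos u = (snd p - y) / D \<and> sin u = fst p / D"
    then show "u = t" using uniq by blast
  qed
  have "0 \<le> Upsilon y p \<and> Upsilon y p < 2 * pi \<and> cos (Upsilon y p) = (snd p - y) / D \<and> sin (Upsilon y p) = fst p / D"
    unfolding Upsilon_def D_def[symmetric] by (rule theI'[OF ex1])
  thus ?thesis unfolding D_def by simp
qed

lemma R1_dist: "R1 c p = dist p (0, c)"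
  by (cases p) (simp add: R1_def dist_Pair_Pair dist_real_def)

lemma R2_dist: "R2 c p = dist p (0, -c)"
  by (cases p) (simp add: R2_def dist_Pair_Pair dist_real_def)

lemma R1_sq: "(R1 c p)\<^sup>2 = (fst p)\<^sup>2 + (snd p - c)\<^sup>2"
  unfolding R1_def by simp

lemma R2_sq: "(R2 c p)\<^sup>2 = (fst p)\<^sup>2 + (snd p + c)\<^sup>2"
  unfolding R2_def by simp

lemma R_nonneg: "R1 c p \<ge> 0" "R2 c p \<ge> 0"
  unfolding R1_def R2_def by simp_all

lemma dl_bound: assumes "m \<ge> 0" shows "\<bar>dl m p\<bar> \<le> m"
proof -
  have "dist (0::real, m) (0, -m) = sqrt ((m - - m)\<^sup>2)" by (simp add: dist_Pair_Pair dist_real_def)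
  also have "\<dots> = \<bar>m - - m\<bar>" by (rule real_sqrt_abs)
  finally have d: "dist (0::real, m) (0, -m) = 2 * m" using assms by simp
  have "dist p (0, -m) \<le> dist p (0, m) + dist (0::real, m) (0, -m)" by (rule dist_triangle)
  moreover have "dist p (0, m) \<le> dist p (0, -m) + dist (0::real, -m) (0, m)" by (rule dist_triangle)
  moreover have "dist (0::real, -m) (0, m) = 2 * m" using d by (simp add: dist_commute)
  ultimately show ?thesis unfolding dl_def R1_dist R2_dist using d by (simp add: abs_le_iff)
qed

lemma weyl_r_sg: "weyl_r m (fst p) (snd p) = m + sg m p"
  by (simp add: weyl_r_def sg_def R1_def R2_def)

lemma sg_axis: assumes "m \<ge> 0" shows "sg m (0, c) \<le> max \<bar>c\<bar> m"
proof -
  have "sg m (0, c) = (\<bar>c - m\<bar> + \<bar>c + m\<bar>) / 2" by (simp add: sg_def R1_def R2_def)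
  also have "\<dots> \<le> max \<bar>c\<bar> m" using assms by (simp add: max_def abs_if)
  finally show ?thesis .
qed

lemma R1_pos_of: assumes "m \<ge> 0" "sg m p > max \<bar>c\<bar> m" shows "R1 c p > 0"
proof (rule ccontr)
  assume "\<not> R1 c p > 0"
  hence "R1 c p = 0" using R_nonneg(1)[of c p] by linarith
  hence "(fst p)\<^sup>2 + (snd p - c)\<^sup>2 = 0" unfolding R1_def by simp
  hence "fst p = 0" "snd p = c" by (simp_all add: sum_power2_eq_zero_iff)
  hence "p = (0, c)" by (cases p) simp
  thus False using sg_axis[OF assms(1), of c] assms(2) by (auto simp: max_def split: if_splits)
qed

lemma R2_eq_R1: "R2 c p = R1 (-c) p" by (simp add: R1_def R2_def)

lemma ext_facts:
  assumes m: "m > 0" and r0: "r0 > 2 * m" and p: "p \<in> exterior m r0" and y: "\<bar>y\<bar> < r0 - m"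
  shows "R1 m p > 0" "R2 m p > 0" "R1 y p > 0" "sg m p > r0 - m" "sg m p > m" "fst p \<ge> 0"
proof -
  show sg: "sg m p > r0 - m" using p unfolding exterior_def by (simp add: weyl_r_sg)
  show "sg m p > m" using sg r0 by simp
  have a: "sg m p > max \<bar>m\<bar> m" "sg m p > max \<bar>-m\<bar> m" "sg m p > max \<bar>y\<bar> m" using sg r0 y m by auto
  show "R1 m p > 0" by (rule R1_pos_of[OF _ a(1)]) (use m in simp)
  show "R2 m p > 0" unfolding R2_eq_R1 by (rule R1_pos_of[OF _ a(2)]) (use m in simp)
  show "R1 y p > 0" by (rule R1_pos_of[OF _ a(3)]) (use m in simp)
  show "fst p \<ge> 0" using p unfolding exterior_def by simp
qed

lemma Npos_alg:
  fixes a b d \<rho> z m y :: real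
  assumes a: "a\<^sup>2 = \<rho>\<^sup>2 + (z-m)\<^sup>2" and b: "b\<^sup>2 = \<rho>\<^sup>2 + (z+m)\<^sup>2" and d: "d\<^sup>2 = \<rho>\<^sup>2 + (z-y)\<^sup>2"
  and pos: "a > 0" "b > 0" "d > 0" "m > 0"
  and sg: "\<sigma> = (a+b)/2" and dl: "\<delta> = (b-a)/2" and sm: "\<sigma> > m" and db: "\<bar>\<delta>\<bar> \<le> m" and ym: "y \<noteq> m"
  shows "(y*\<sigma> - m*\<delta> - m*d) / (y - m) > 0"
proof -
  note G = geom_setup[OF a b pos(1,2,4) sg dl]
  have "d\<^sup>2 = ((\<sigma>\<^sup>2-m\<^sup>2)*(m\<^sup>2-\<delta>\<^sup>2))/m\<^sup>2 + (\<sigma>*\<delta>/m - y)\<^sup>2" using d unfolding G(4) G(1) by simp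
  also have "\<dots> = \<sigma>\<^sup>2+\<delta>\<^sup>2+y\<^sup>2-m\<^sup>2-2*\<sigma>*\<delta>*y/m" using pos by (simp add: field_simps power2_eq_square)
  finally have dd: "d\<^sup>2 = \<sigma>\<^sup>2+\<delta>\<^sup>2+y\<^sup>2-m\<^sup>2-2*\<sigma>*\<delta>*y/m" .
  have key: "(m*d)\<^sup>2 - (y*\<sigma> - m*\<delta>)\<^sup>2 = (\<sigma>\<^sup>2 - m\<^sup>2) * (m\<^sup>2 - y\<^sup>2)"
  proof -
    have "(m*d)\<^sup>2 = m\<^sup>2 * d\<^sup>2" by (simp add: power_mult_distrib)
    also have "\<dots> = m\<^sup>2 * (\<sigma>\<^sup>2+\<delta>\<^sup>2+y\<^sup>2-m\<^sup>2) - 2*\<sigma>*\<delta>*y*m" unfolding dd using pos by (simp add: field_simps power2_eq_square)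
    finally show ?thesis by (simp add: power2_eq_square algebra_simps)
  qed
  have Q: "\<sigma>\<^sup>2 - m\<^sup>2 > 0" using sm pos by (simp add: power_strict_mono)
  have md: "m * d > 0" using pos by simp
  have dm: "\<delta> \<le> m" "-m \<le> \<delta>" using db by (simp_all add: abs_le_iff)
  have "m * \<delta> \<le> m * m" "m * (-m) \<le> m * \<delta>"
    using mult_left_mono[OF dm(1), of m] mult_left_mono[OF dm(2), of m] pos by auto
  hence mdl: "m * \<delta> \<le> m * m" "- (m * m) \<le> m * \<delta>" by simp_all
  consider "\<bar>y\<bar> < m" | "y > m" | "y = -m" | "y < -m" using ym by linarith
  then show ?thesis
  proof cases
    case 1
    have "\<bar>y\<bar>^2 < m^2" by (rule power_strict_mono) (use 1 in auto)
    hence "m\<^sup>2 - y\<^sup>2 > 0" by simp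
    hence "(\<sigma>\<^sup>2 - m\<^sup>2) * (m\<^sup>2 - y\<^sup>2) > 0" using Q by (rule mult_pos_pos[rotated])
    hence "\<bar>y*\<sigma> - m*\<delta>\<bar>\<^sup>2 < (m*d)\<^sup>2" using key by simp
    hence "\<bar>y*\<sigma> - m*\<delta>\<bar> < m*d" by (rule power2_less_imp_less[OF _ less_imp_le[OF md]])
    hence "y*\<sigma> - m*\<delta> - m*d < 0" by simp
    moreover have "y - m < 0" using 1 by simp
    ultimately show ?thesis by (simp add: divide_neg_neg)
  next
    case 2
    have "m^2 < y^2" by (rule power_strict_mono) (use 2 pos in auto)
    hence "m\<^sup>2 - y\<^sup>2 < 0" by simp
    hence "(\<sigma>\<^sup>2 - m\<^sup>2) * (m\<^sup>2 - y\<^sup>2) < 0" using Q by (simp add: mult_pos_neg)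
    hence "(m*d)\<^sup>2 < (y*\<sigma> - m*\<delta>)\<^sup>2" using key by simp
    moreover have "m * m < y*\<sigma>" by (rule mult_strict_mono) (use 2 sm pos in auto)
    hence pos2: "y*\<sigma> - m*\<delta> > 0" using mdl by simp
    ultimately have "m*d < y*\<sigma> - m*\<delta>" by (rule power2_less_imp_less[OF _ less_imp_le])
    thus ?thesis using 2 by simp
  next
    case 3
    have "y*\<sigma> - m*\<delta> - m*d = - m * (\<sigma> + \<delta> + d)" using 3 by (simp add: algebra_simps)
    moreover have "\<sigma> + \<delta> + d > 0" using G(3) pos by simp
    ultimately have "y*\<sigma> - m*\<delta> - m*d < 0" using pos by (simp add: mult_pos_pos)
    moreover have "y - m < 0" using 3 pos by simp
    ultimately show ?thesis by (simp add: divide_neg_neg)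
  next
    case 4
    have "m^2 < (-y)^2" by (rule power_strict_mono) (use 4 pos in auto)
    hence "m\<^sup>2 - y\<^sup>2 < 0" by simp
    hence "(\<sigma>\<^sup>2 - m\<^sup>2) * (m\<^sup>2 - y\<^sup>2) < 0" using Q by (simp add: mult_pos_neg)
    hence "(m*d)\<^sup>2 < (y*\<sigma> - m*\<delta>)\<^sup>2" using key by simp
    hence "(m*d)\<^sup>2 < (m*\<delta> - y*\<sigma>)\<^sup>2" by (simp add: power2_commute)
    moreover have "m * m < (-y)*\<sigma>" by (rule mult_strict_mono) (use 4 sm pos in auto)
    hence pos2: "m*\<delta> - y*\<sigma> > 0" using mdl by simp
    ultimately have "m*d < m*\<delta> - y*\<sigma>" by (rule power2_less_imp_less[OF _ less_imp_le])
    hence "y*\<sigma> - m*\<delta> - m*d < 0" using md by linarith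
    moreover have "y - m < 0" using 4 pos by simp
    ultimately show ?thesis by (simp add: divide_neg_neg)
  qed
qed

lemma lin_hodge: assumes "ZA = c*UA + s*UB" "ZB = c*UB - s*UA" shows
   "lin ZA ZB = (\<lambda>h. c * lin UA UB h + s * hodge (lin UA UB) h)"
  unfolding assms lin_def hodge_def by (simp add: fun_eq_iff algebra_simps)

lemma Zs_solves:
  assumes m: "m > 0" and r0: "r0 > 2 * m" and y: "\<bar>y\<bar> < r0 - m"
  shows "solves_Z m (exterior m r0) y (Zs m y)"
  unfolding solves_Z_def
proof (intro ballI)
  fix p assume p: "p \<in> exterior m r0"
  note E = ext_facts[OF m r0 p y]
  have "m^2 < (sg m p)^2" by (rule power_strict_mono) (use E(5) m in auto)
  hence sm: "(sg m p)\<^sup>2 - m\<^sup>2 \<noteq> 0" by simp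
  note dU = lin_comp[OF DhU[OF m E(5)] dsg[OF E(1,2)], folded U0_eq]
  have Ups: "cos (Upsilon y p) = (snd p - y) / R1 y p \<and> sin (Upsilon y p) = fst p / R1 y p"
    using Upsilon_eq[of p y] E(3) unfolding R1_def by simp
  note rel = R1_sq[of m p] R2_sq[of m p] R1_sq[of y p]
  have sgd: "sg m p = (R1 m p + R2 m p) / 2" "dl m p = (R2 m p - R1 m p) / 2" by (simp_all add: sg_def dl_def)
  show "\<exists>dU dZ. (U0 m has_derivative dU) (at p within weylK) \<and> (Zs m y has_derivative dZ) (at p within weylK) \<and>
          dZ = (\<lambda>h. cos (Upsilon y p) * dU h + sin (Upsilon y p) * hodge dU h)"
  proof (cases "y = m")
    case True
    have Zeq: "Zs m y = (\<lambda>p. ln (R1 m p) - hk m (sg m p))" using True by (simp add: Zs_def fun_eq_iff)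
    note dZ = lin_diff[OF lin_comp[OF Dln[OF E(1)] dR1[OF E(1)]] lin_comp[OF Dhk[OF m E(5)] dsg[OF E(1,2)]], folded Zeq]
    note I = idm[OF rel(1,2) E(1,2) m sgd sm]
    show ?thesis
      apply (rule exI, rule exI, intro conjI)
        apply (rule has_derivative_at_withinI[OF dU])
       apply (rule has_derivative_at_withinI[OF dZ])
      apply (rule lin_hodge)
      using I Ups True by simp_all
  next
    case False
    have Zeq: "Zs m y = (\<lambda>p. hk m (sg m p) - ln (Nf m y p / (y - m)))" using False by (simp add: Zs_def fun_eq_iff)
    have Np: "Nf m y p / (y - m) > 0" unfolding Nf_def
      by (rule Npos_alg[OF rel E(1,2,3) m sgd E(5) dl_bound False]) (use m in simp)
    note dZ = lin_diff[OF lin_comp[OF Dhk[OF m E(5)] dsg[OF E(1,2)]] lin_comp[OF Dlndiv[OF Np] dN[OF E(1,2,3)]], folded Zeq]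
    have N0: "Nf m y p \<noteq> 0" using Np by auto
    note I = idrho[OF rel E(1,2,3) m sgd sm Nf_def N0]
    show ?thesis
      apply (rule exI, rule exI, intro conjI)
        apply (rule has_derivative_at_withinI[OF dU])
       apply (rule has_derivative_at_withinI[OF dZ])
      apply (rule lin_hodge)
      using I Ups by simp_all
  qed
qed

lemma ln_diff_bound:
  fixes X Y :: real assumes "X > 0" "Y > 0"
  shows "\<bar>ln X - ln Y\<bar> \<le> \<bar>X - Y\<bar> / min X Y"
proof -
  have gen: "\<bar>ln A - ln B\<bar> \<le> \<bar>A - B\<bar> / min A B" if ab: "A > 0" "B > 0" "B \<le> A" for A B :: real
  proof -
    have "ln A - ln B = ln (A / B)" using ab by (simp add: ln_div)
    also have "\<dots> \<le> A / B - 1" by (rule ln_le_minus_one) (use ab in simp)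
    also have "\<dots> = (A - B) / B" using ab by (simp add: field_simps)
    finally have "ln A - ln B \<le> (A - B) / B" .
    moreover have "ln B \<le> ln A" using ab by simp
    moreover have "min A B = B" using ab by simp
    ultimately show ?thesis using ab by simp
  qed
  show ?thesis
  proof (cases "Y \<le> X")
    case True then show ?thesis using gen[of X Y] assms by simp
  next
    case False
    hence "\<bar>ln Y - ln X\<bar> \<le> \<bar>Y - X\<bar> / min Y X" using gen[of Y X] assms by simp
    thus ?thesis by (simp add: abs_minus_commute min.commute)
  qed
qed

lemma vanish_gen:
  assumes K: "K \<ge> 0"
    and H: "\<And>p. p \<in> S \<Longrightarrow> \<exists>X Y. X > 0 \<and> Y > 0 \<and> \<bar>X - norm p\<bar> \<le> K \<and> \<bar>Y - norm p\<bar> \<le> K \<and> Z p = ln X - ln Y"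
  shows "vanishes_at_infinity S Z"
  unfolding vanishes_at_infinity_def
proof (intro allI impI)
  fix e :: real assume e: "e > 0"
  show "\<exists>R. \<forall>p\<in>S. R < norm p \<longrightarrow> \<bar>Z p\<bar> < e"
  proof (intro exI[of _ "K + 2 * K / e"] ballI impI)
    fix p assume p: "p \<in> S" and R: "K + 2 * K / e < norm p"
    obtain X Y where XY: "X > 0" "Y > 0" "\<bar>X - norm p\<bar> \<le> K" "\<bar>Y - norm p\<bar> \<le> K" "Z p = ln X - ln Y"
      using H[OF p] by blast
    have mn: "min X Y \<ge> norm p - K" using XY by (simp add: abs_le_iff)
    have KE: "2 * K / e \<ge> 0" using K e by simp
    have mpos: "min X Y > 2 * K / e" using mn R by linarith
    have XYd: "\<bar>X - Y\<bar> \<le> 2 * K" using XY by (simp add: abs_le_iff)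
    have m0: "min X Y > 0" using XY by simp
    have "\<bar>Z p\<bar> \<le> \<bar>X - Y\<bar> / min X Y" unfolding XY(5) by (rule ln_diff_bound) (use XY in auto)
    also have "\<dots> \<le> 2 * K / min X Y" by (rule divide_right_mono[OF XYd]) (use m0 in simp)
    also have "\<dots> < e"
    proof (cases "K = 0")
      case True then show ?thesis using e by simp
    next
      case False
      hence "2 * K / e < min X Y" using mpos by simp
      hence h: "2 * K < min X Y * e" by (subst (asm) pos_divide_less_eq[OF e])
      have "2 * K < e * min X Y" using h by (simp only: mult.commute)
      thus ?thesis by (subst pos_divide_less_eq[OF m0])
    qed
    finally show "\<bar>Z p\<bar> < e" .
  qed
qed

lemma R1_norm: "\<bar>R1 c p - norm p\<bar> \<le> \<bar>c\<bar>"
proof -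
  have n: "norm p = dist p (0, 0)" by (metis dist_0_norm dist_commute zero_prod_def)
  have d: "dist (0::real, c) (0, 0) = \<bar>c\<bar>" by (simp add: dist_Pair_Pair dist_real_def)
  have "dist p (0, c) \<le> dist p (0, 0) + dist (0::real, 0) (0, c)" by (rule dist_triangle)
  moreover have "dist p (0, 0) \<le> dist p (0, c) + dist (0::real, c) (0, 0)" by (rule dist_triangle)
  ultimately show ?thesis unfolding R1_dist n using d by (simp add: dist_commute abs_le_iff)
qed

lemma R2_norm: "\<bar>R2 c p - norm p\<bar> \<le> \<bar>c\<bar>"
  using R1_norm[of "-c" p] unfolding R2_eq_R1 by simp

lemma sg_norm: assumes "m \<ge> 0" shows "\<bar>sg m p - norm p\<bar> \<le> m"
proof -
  have a: "\<bar>R1 m p - norm p\<bar> \<le> m" using R1_norm[of m p] assms by simp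
  have b: "\<bar>R2 m p - norm p\<bar> \<le> m" using R2_norm[of m p] assms by simp
  have a1: "R1 m p - norm p \<le> m" "norm p - R1 m p \<le> m" using a by (auto simp: abs_le_iff)
  have b1: "R2 m p - norm p \<le> m" "norm p - R2 m p \<le> m" using b by (auto simp: abs_le_iff)
  have c1: "(R1 m p + R2 m p) / 2 - norm p \<le> m" using a1 b1 by (simp add: field_simps)
  have c2: "- ((R1 m p + R2 m p) / 2 - norm p) \<le> m" using a1 b1 by (simp add: field_simps)
  show ?thesis unfolding sg_def abs_le_iff using c1 c2 by blast
qed

lemma Zs_vanish:
  assumes m: "m > 0" and r0: "r0 > 2 * m" and y: "\<bar>y\<bar> < r0 - m"
  shows "vanishes_at_infinity (exterior m r0) (Zs m y)"
proof (rule vanish_gen)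
  define C where "C = (2 * \<bar>y\<bar> * m + m * m) / \<bar>y - m\<bar>"
  have C0: "C \<ge> 0" unfolding C_def using m by simp
  show "2 * m + C \<ge> 0" using C0 m by simp
  fix p assume p: "p \<in> exterior m r0"
  note E = ext_facts[OF m r0 p y]
  define t where "t = norm p"
  define \<sigma> where "\<sigma> = sg m p"
  have st: "\<bar>\<sigma> - t\<bar> \<le> m" unfolding \<sigma>_def t_def using sg_norm m by simp
  have sm: "\<sigma> > m" using E(5) \<sigma>_def by simp
  define X where "X = sqrt (\<sigma>\<^sup>2 - m\<^sup>2)"
  have Q: "\<sigma>\<^sup>2 - m\<^sup>2 > 0" using sm m by (simp add: power_strict_mono)
  have X0: "X > 0" unfolding X_def using Q by simp
  have hkX: "hk m \<sigma> = ln X" unfolding X_def hk_def using Q by (simp add: ln_sqrt)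
  have Xle: "X \<le> \<sigma>"
  proof -
    have "X \<le> sqrt (\<sigma>\<^sup>2)" unfolding X_def by (rule real_sqrt_le_mono) simp
    thus ?thesis using sm m by simp
  qed
  have Xge: "\<sigma> - m \<le> X"
  proof -
    have e1: "(\<sigma> - m)\<^sup>2 = \<sigma>\<^sup>2 - m\<^sup>2 - 2*(m*(\<sigma> - m))" by (simp add: power2_eq_square algebra_simps)
    have "m*(\<sigma> - m) \<ge> 0" using sm m by simp
    hence "(\<sigma> - m)\<^sup>2 \<le> \<sigma>\<^sup>2 - m\<^sup>2" unfolding e1 by linarith
    hence "sqrt ((\<sigma> - m)\<^sup>2) \<le> X" unfolding X_def by (rule real_sqrt_le_mono)
    thus ?thesis using sm by simp
  qed
  have Xt: "\<bar>X - t\<bar> \<le> 2 * m + C" using Xle Xge st C0 by (simp add: abs_le_iff)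
  show "\<exists>X Y. X > 0 \<and> Y > 0 \<and> \<bar>X - norm p\<bar> \<le> 2 * m + C \<and> \<bar>Y - norm p\<bar> \<le> 2 * m + C \<and> Zs m y p = ln X - ln Y"
  proof (cases "y = m")
    case True
    have "\<bar>R1 m p - t\<bar> \<le> m" unfolding t_def using R1_norm[of m p] m by simp
    hence "\<bar>R1 m p - t\<bar> \<le> 2 * m + C" using C0 m by simp
    moreover have "Zs m y p = ln (R1 m p) - ln X" using True hkX unfolding Zs_def \<sigma>_def by simp
    ultimately show ?thesis using E(1) X0 Xt unfolding t_def by blast
  next
    case False
    define Y where "Y = Nf m y p / (y - m)"
    have Y0: "Y > 0" unfolding Y_def Nf_def
      by (rule Npos_alg[OF R1_sq[of m p] R2_sq[of m p] R1_sq[of y p] E(1,2,3) m _ _ E(5) dl_bound False])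
         (use m in \<open>simp_all add: sg_def dl_def\<close>)
    define d where "d = R1 y p"
    define \<delta> where "\<delta> = dl m p"
    have dt: "\<bar>d - t\<bar> \<le> \<bar>y\<bar>" unfolding d_def t_def by (rule R1_norm)
    have db: "\<bar>\<delta>\<bar> \<le> m" unfolding \<delta>_def using dl_bound m by simp
    have ym: "y - m \<noteq> 0" using False by simp
    have N: "Nf m y p = y*\<sigma> - m*\<delta> - m*d" unfolding Nf_def \<sigma>_def \<delta>_def d_def ..
    have aux3: "\<And>A c t. (c::real) \<noteq> 0 \<Longrightarrow> A / c - t = (A - t * c) / c" by (simp add: field_simps)
    have "Y - t = ((y*\<sigma> - m*\<delta> - m*d) - t * (y - m)) / (y - m)" unfolding Y_def N by (rule aux3[OF ym])
    also have "(y*\<sigma> - m*\<delta> - m*d) - t * (y - m) = y * (\<sigma> - t) - m * \<delta> - m * (d - t)" by (simp add: algebra_simps)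
    finally have "Y - t = (y * (\<sigma> - t) - m * \<delta> - m * (d - t)) / (y - m)" .
    hence "\<bar>Y - t\<bar> = \<bar>y * (\<sigma> - t) - m * \<delta> - m * (d - t)\<bar> / \<bar>y - m\<bar>" by (simp add: abs_divide)
    also have "\<dots> \<le> (\<bar>y\<bar> * m + m * m + m * \<bar>y\<bar>) / \<bar>y - m\<bar>"
    proof (rule divide_right_mono)
      have "\<bar>y * (\<sigma> - t)\<bar> \<le> \<bar>y\<bar> * m" unfolding abs_mult by (rule mult_left_mono[OF st]) simp
      moreover have "\<bar>m * \<delta>\<bar> \<le> m * m" unfolding abs_mult using db m by (simp add: mult_left_mono)
      moreover have "\<bar>m * (d - t)\<bar> \<le> m * \<bar>y\<bar>" unfolding abs_mult using dt m by (simp add: mult_left_mono)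
      ultimately show "\<bar>y * (\<sigma> - t) - m * \<delta> - m * (d - t)\<bar> \<le> \<bar>y\<bar> * m + m * m + m * \<bar>y\<bar>" by linarith
    qed simp
    also have "\<dots> = C" unfolding C_def by (simp add: algebra_simps)
    finally have "\<bar>Y - t\<bar> \<le> 2 * m + C" using m by simp
    moreover have "Zs m y p = ln X - ln Y" using False hkX unfolding Zs_def \<sigma>_def Y_def by simp
    ultimately show ?thesis using Y0 X0 Xt unfolding t_def by blast
  qed
qed

lemma deriv_unique_weylK:
  assumes q: "q \<in> weylK" and f1: "(f has_derivative f1) (at q within weylK)"
    and f2: "(f has_derivative f2) (at q within weylK)"
  shows "f1 = f2"
proof (rule frechet_derivative_unique_within[OF f1 f2])
  fix i :: "real \<times> real" and e :: real
  assume i: "i \<in> Basis" and e: "e > 0"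
  have "i = (1, 0) \<or> i = (0, 1)" using i by (auto simp: Basis_prod_def)
  moreover have "fst q \<ge> 0" using q by (simp add: weylK_def)
  ultimately have "q + (e/2) *\<^sub>R i \<in> weylK" using e by (auto simp: weylK_def)
  moreover have "0 < \<bar>e/2\<bar>" "\<bar>e/2\<bar> < e" using e by auto
  ultimately show "\<exists>d. 0 < \<bar>d\<bar> \<and> \<bar>d\<bar> < e \<and> q + d *\<^sub>R i \<in> weylK" by blast
qed

lemma exterior_sub: "exterior m r0 \<subseteq> weylK"
  by (auto simp: exterior_def weylK_def)

lemma diff_zero:
  assumes s1: "solves_Z m (exterior m r0) y Z1" and s2: "solves_Z m (exterior m r0) y Z2"
    and q: "q \<in> exterior m r0"
  shows "((\<lambda>x. Z1 x - Z2 x) has_derivative (\<lambda>h. 0)) (at q within weylK)"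
proof -
  obtain dU1 dZ1 where A: "(U0 m has_derivative dU1) (at q within weylK)" "(Z1 has_derivative dZ1) (at q within weylK)"
      "dZ1 = (\<lambda>h. cos (Upsilon y q) * dU1 h + sin (Upsilon y q) * hodge dU1 h)"
    using s1 q unfolding solves_Z_def by blast
  obtain dU2 dZ2 where B: "(U0 m has_derivative dU2) (at q within weylK)" "(Z2 has_derivative dZ2) (at q within weylK)"
      "dZ2 = (\<lambda>h. cos (Upsilon y q) * dU2 h + sin (Upsilon y q) * hodge dU2 h)"
    using s2 q unfolding solves_Z_def by blast
  have qK: "q \<in> weylK" using q exterior_sub by blast
  have "dU1 = dU2" by (rule deriv_unique_weylK[OF qK A(1) B(1)])
  hence "dZ1 = dZ2" using A(3) B(3) by simp
  from has_derivative_diff[OF A(2) B(2)] this show ?thesis by simp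
qed

lemma norm_R: "R1 m q = norm (q - (0, m))" "R2 m q = norm (q + (0, m))"
proof -
  show "R1 m q = norm (q - (0, m))" by (simp add: R1_dist dist_norm)
  have e: "q - (0, -m) = q + (0, m)" by (cases q) simp
  show "R2 m q = norm (q + (0, m))" by (simp only: R2_dist dist_norm e)
qed

lemma sg_mono:
  assumes t: "t \<ge> 1" and m: "m \<ge> 0"
  shows "sg m p \<le> sg m (t *\<^sub>R p)"
proof -
  define e :: "real \<times> real" where "e = (0, m)"
  define l where "l = (1 + 1/t) / 2"
  define u where "u = (1 - 1/t) / 2"
  have t0: "t > 0" using t by simp
  have l0: "l \<ge> 0" unfolding l_def using t0 by simp
  have u0: "u \<ge> 0" unfolding u_def using t by (simp add: field_simps)
  have lu1: "l + u = 1" unfolding l_def u_def by (simp add: field_simps)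
  have lut: "(l - u) * t = 1" unfolding l_def u_def using t0 by (simp add: field_simps)
  have v1: "p - e = l *\<^sub>R (t *\<^sub>R p - e) - u *\<^sub>R (t *\<^sub>R p + e)"
  proof -
    have "l *\<^sub>R (t *\<^sub>R p - e) - u *\<^sub>R (t *\<^sub>R p + e) = ((l - u) * t) *\<^sub>R p - (l + u) *\<^sub>R e"
      by (simp add: algebra_simps)
    thus ?thesis unfolding lut lu1 by simp
  qed
  have v2: "p + e = l *\<^sub>R (t *\<^sub>R p + e) - u *\<^sub>R (t *\<^sub>R p - e)"
  proof -
    have "l *\<^sub>R (t *\<^sub>R p + e) - u *\<^sub>R (t *\<^sub>R p - e) = ((l - u) * t) *\<^sub>R p + (l + u) *\<^sub>R e"
      by (simp add: algebra_simps)
    thus ?thesis unfolding lut lu1 by simp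
  qed
  have n1: "norm (p - e) \<le> l * norm (t *\<^sub>R p - e) + u * norm (t *\<^sub>R p + e)"
    unfolding v1 using norm_triangle_ineq4[of "l *\<^sub>R (t *\<^sub>R p - e)" "u *\<^sub>R (t *\<^sub>R p + e)"] l0 u0 by simp
  have n2: "norm (p + e) \<le> l * norm (t *\<^sub>R p + e) + u * norm (t *\<^sub>R p - e)"
    unfolding v2 using norm_triangle_ineq4[of "l *\<^sub>R (t *\<^sub>R p + e)" "u *\<^sub>R (t *\<^sub>R p - e)"] l0 u0 by simp
  have "norm (p - e) + norm (p + e) \<le> (l + u) * (norm (t *\<^sub>R p - e) + norm (t *\<^sub>R p + e))"
    using n1 n2 by (simp add: algebra_simps)
  hence "norm (p - e) + norm (p + e) \<le> norm (t *\<^sub>R p - e) + norm (t *\<^sub>R p + e)" unfolding lu1 by simp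
  thus ?thesis unfolding sg_def norm_R e_def by simp
qed

lemma ray_exterior:
  assumes m: "m > 0" and p: "p \<in> exterior m r0" and t: "t \<ge> 1"
  shows "t *\<^sub>R p \<in> exterior m r0"
proof -
  have "weyl_r m (fst p) (snd p) > r0" "fst p \<ge> 0" using p by (auto simp: exterior_def)
  moreover have "sg m p \<le> sg m (t *\<^sub>R p)" by (rule sg_mono[OF t]) (use m in simp)
  moreover have "weyl_r m (fst (t *\<^sub>R p)) (snd (t *\<^sub>R p)) = m + sg m (t *\<^sub>R p)" by (rule weyl_r_sg)
  moreover have "weyl_r m (fst p) (snd p) = m + sg m p" by (rule weyl_r_sg)
  moreover have "fst (t *\<^sub>R p) \<ge> 0" using t \<open>fst p \<ge> 0\<close> by simp
  ultimately show ?thesis unfolding exterior_def mem_Collect_eq by linarith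
qed

lemma unique_Z:
  assumes m: "m > 0" and r0: "r0 > 2 * m"
    and s1: "solves_Z m (exterior m r0) y Z1" and v1: "vanishes_at_infinity (exterior m r0) Z1"
    and s2: "solves_Z m (exterior m r0) y Z2" and v2: "vanishes_at_infinity (exterior m r0) Z2"
    and p: "p \<in> exterior m r0"
  shows "Z1 p = Z2 p"
proof -
  define g where "g = (\<lambda>t. Z1 (t *\<^sub>R p) - Z2 (t *\<^sub>R p))"
  have gT: "g 1 = g T" if T: "T \<ge> 1" for T
  proof -
    have D: "(g has_derivative (\<lambda>s. 0)) (at t within {1..T})" if t: "t \<in> {1..T}" for t
    proof -
      have tp: "t *\<^sub>R p \<in> exterior m r0" by (rule ray_exterior[OF m p]) (use t in auto)
      have f: "((\<lambda>t. t *\<^sub>R p) has_derivative (\<lambda>s. s *\<^sub>R p)) (at t within {1..T})"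
        by (rule bounded_linear_imp_has_derivative[OF bounded_linear_scaleR_left])
      have img: "(\<lambda>t. t *\<^sub>R p) ` {1..T} \<subseteq> weylK"
      proof
        fix x assume "x \<in> (\<lambda>t. t *\<^sub>R p) ` {1..T}"
        then obtain s where s: "s \<in> {1..T}" "x = s *\<^sub>R p" by blast
        have "s *\<^sub>R p \<in> exterior m r0" by (rule ray_exterior[OF m p]) (use s in simp)
        hence "s *\<^sub>R p \<in> weylK" using exterior_sub[of m r0] by (rule subsetD[rotated])
        thus "x \<in> weylK" using s(2) by simp
      qed
      have dz: "((\<lambda>x. Z1 x - Z2 x) has_derivative (\<lambda>h. 0)) (at (t *\<^sub>R p) within ((\<lambda>t. t *\<^sub>R p) ` {1..T}))"
        by (rule has_derivative_subset[OF diff_zero[OF s1 s2 tp] img])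
      from has_derivative_in_compose[OF f dz] show ?thesis unfolding g_def by simp
    qed
    show ?thesis by (rule has_derivative_zero_unique[OF convex_real_interval(5) D]) (use T in auto)
  qed
  have np: "norm p > 0"
  proof (rule ccontr)
    assume "\<not> norm p > 0"
    hence "p = 0" by simp
    hence "sg m p = m" using m by (simp add: sg_def R1_def R2_def zero_prod_def)
    moreover have "sg m p > m" using ext_facts(5)[OF m r0 p, of 0] r0 m by simp
    ultimately show False by simp
  qed
  have small: "\<bar>g 1\<bar> < e" if e: "e > 0" for e
  proof -
    obtain Ra where Ra: "\<forall>q\<in>exterior m r0. Ra < norm q \<longrightarrow> \<bar>Z1 q\<bar> < e / 2"
      using v1 e unfolding vanishes_at_infinity_def by (meson half_gt_zero)
    obtain Rb where Rb: "\<forall>q\<in>exterior m r0. Rb < norm q \<longrightarrow> \<bar>Z2 q\<bar> < e / 2"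
      using v2 e unfolding vanishes_at_infinity_def by (meson half_gt_zero)
    define T where "T = 1 + (\<bar>Ra\<bar> + \<bar>Rb\<bar>) / norm p"
    have T1: "T \<ge> 1" unfolding T_def using np by simp
    have nT: "norm (T *\<^sub>R p) = norm p + \<bar>Ra\<bar> + \<bar>Rb\<bar>"
      using T1 np unfolding T_def by (simp add: field_simps)
    have Tp: "T *\<^sub>R p \<in> exterior m r0" by (rule ray_exterior[OF m p T1])
    have "Ra < norm (T *\<^sub>R p)" "Rb < norm (T *\<^sub>R p)" using nT np by linarith+
    hence "\<bar>Z1 (T *\<^sub>R p)\<bar> < e / 2" "\<bar>Z2 (T *\<^sub>R p)\<bar> < e / 2" using Ra Rb Tp by auto
    hence "\<bar>g T\<bar> < e" unfolding g_def by linarith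
    thus ?thesis using gT[OF T1] by simp
  qed
  have "g 1 = 0"
  proof (rule ccontr)
    assume "g 1 \<noteq> 0"
    hence "\<bar>g 1\<bar> > 0" by simp
    from small[OF this] show False by simp
  qed
  thus ?thesis unfolding g_def by simp
qed

lemma weyl_of_facts:
  assumes m: "m > 0" and r: "r > 2 * m" and th: "0 \<le> \<theta>" "\<theta> \<le> pi"
  defines "x \<equiv> r / m - 1"
  shows "fst (weyl_of m r \<theta>) \<ge> 0" "x > 1"
    "\<And>k. (fst (weyl_of m r \<theta>))\<^sup>2 + (snd (weyl_of m r \<theta>) - k)\<^sup>2
        = m\<^sup>2 * x\<^sup>2 + k\<^sup>2 - 2 * m * x * k * cos \<theta> - m\<^sup>2 * (sin \<theta>)\<^sup>2"
proof -
  have s0: "sin \<theta> \<ge> 0" using th by (simp add: sin_ge_zero)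
  have r0: "r > 0" using r m by simp
  have a0: "1 - 2 * m / r \<ge> 0" using r r0 by (simp add: field_simps)
  show "fst (weyl_of m r \<theta>) \<ge> 0" unfolding weyl_of_def using s0 r0 a0 by simp
  show x1: "x > 1" unfolding x_def using r m by (simp add: field_simps)
  have rx: "r = m * (x + 1)" unfolding x_def using m by (simp add: field_simps)
  have f2: "(fst (weyl_of m r \<theta>))\<^sup>2 = r\<^sup>2 * (sin \<theta>)\<^sup>2 * (1 - 2 * m / r)"
    unfolding weyl_of_def using a0 by (simp add: power_mult_distrib)
  also have "\<dots> = m\<^sup>2 * (x\<^sup>2 - 1) * (sin \<theta>)\<^sup>2"
  proof -
    have g: "\<And>u S. u > 0 \<Longrightarrow> (m * u)\<^sup>2 * S * (1 - 2 * m / (m * u)) = m\<^sup>2 * (u * u - 2 * u) * S"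
      using m by (simp add: field_simps power2_eq_square)
    have "(m * (x + 1))\<^sup>2 * (sin \<theta>)\<^sup>2 * (1 - 2 * m / (m * (x + 1))) = m\<^sup>2 * ((x + 1) * (x + 1) - 2 * (x + 1)) * (sin \<theta>)\<^sup>2"
      by (rule g) (use x1 in simp)
    thus ?thesis unfolding rx by (simp add: power2_eq_square algebra_simps)
  qed
  finally have f2': "(fst (weyl_of m r \<theta>))\<^sup>2 = m\<^sup>2 * (x\<^sup>2 - 1) * (sin \<theta>)\<^sup>2" .
  have sn: "snd (weyl_of m r \<theta>) = m * x * cos \<theta>" unfolding weyl_of_def rx by (simp add: algebra_simps)
  fix k
  show "(fst (weyl_of m r \<theta>))\<^sup>2 + (snd (weyl_of m r \<theta>) - k)\<^sup>2
        = m\<^sup>2 * x\<^sup>2 + k\<^sup>2 - 2 * m * x * k * cos \<theta> - m\<^sup>2 * (sin \<theta>)\<^sup>2"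
    unfolding f2' sn sin_squared_eq by (simp add: power2_eq_square algebra_simps)
qed

lemma Np_ext:
  assumes m: "m > 0" and r0: "r0 > 2 * m" and y: "\<bar>y\<bar> < r0 - m" and p: "p \<in> exterior m r0" and ym: "y \<noteq> m"
  shows "Nf m y p / (y - m) > 0"
proof -
  note E = ext_facts[OF m r0 p y]
  note rel = R1_sq[of m p] R2_sq[of m p] R1_sq[of y p]
  have sgd: "sg m p = (R1 m p + R2 m p) / 2" "dl m p = (R2 m p - R1 m p) / 2" by (simp_all add: sg_def dl_def)
  show ?thesis unfolding Nf_def
    by (rule Npos_alg[OF rel E(1,2,3) m sgd E(5) dl_bound ym]) (use m in simp)
qed

lemma eval_point:
  assumes m: "m > 0" and r0: "r0 > 2 * m" and r: "r > r0" and th: "0 \<le> \<theta>" "\<theta> \<le> pi"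
  defines "x \<equiv> r / m - 1" and "p \<equiv> weyl_of m r \<theta>"
  shows "p \<in> exterior m r0" "x > 1"
    "R1 m p = m * (x - cos \<theta>)" "R2 m p = m * (x + cos \<theta>)" "R1 y p = Sroot m y x \<theta>"
    "sg m p = m * x" "dl m p = m * cos \<theta>"
proof -
  have r2: "r > 2 * m" using r r0 by simp
  note W = weyl_of_facts[OF m r2 th, folded x_def p_def]
  show x1: "x > 1" by (fact W(2))
  have c1: "cos \<theta> \<le> 1" "-1 \<le> cos \<theta>" by simp_all
  have pa: "x - cos \<theta> > 0" "x + cos \<theta> > 0" using x1 c1 by linarith+
  have "R1 m p = sqrt ((m * (x - cos \<theta>))\<^sup>2)" unfolding R1_def W(3) sin_squared_eq
    by (simp add: power2_eq_square algebra_simps)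
  thus R1: "R1 m p = m * (x - cos \<theta>)" using pa m by simp
  have "R2 m p = sqrt ((m * (x + cos \<theta>))\<^sup>2)"
  proof -
    have "R2 m p = sqrt ((fst p)\<^sup>2 + (snd p - (-m))\<^sup>2)" unfolding R2_def by simp
    also have "\<dots> = sqrt ((m * (x + cos \<theta>))\<^sup>2)" unfolding W(3) sin_squared_eq
      by (simp add: power2_eq_square algebra_simps)
    finally show ?thesis .
  qed
  thus R2: "R2 m p = m * (x + cos \<theta>)" using pa m by simp
  show "R1 y p = Sroot m y x \<theta>" unfolding R1_def W(3) Sroot_def ..
  show sg: "sg m p = m * x" unfolding sg_def R1 R2 by (simp add: algebra_simps)
  show "dl m p = m * cos \<theta>" unfolding dl_def R1 R2 by (simp add: algebra_simps)
  have "weyl_r m (fst p) (snd p) = r" unfolding weyl_r_sg sg x_def using m by (simp add: field_simps)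
  thus "p \<in> exterior m r0" using W(1) r unfolding exterior_def by simp
qed

lemma hk_val: assumes "m > 0" "x > 1" shows "hk m (m * x) = ln (m * sqrt (x\<^sup>2 - 1))"
proof -
  have "(m * x)\<^sup>2 - m\<^sup>2 = m\<^sup>2 * (x\<^sup>2 - 1)" by (simp add: power2_eq_square algebra_simps)
  moreover have "x\<^sup>2 - 1 > 0" using assms by (simp add: power2_eq_square) (smt (verit) mult_less_cancel_left1)
  ultimately show ?thesis unfolding hk_def using assms
    by (simp add: ln_sqrt[symmetric] real_sqrt_mult)
qed

lemma exp_mZ:
  assumes m: "m > 0" and r0: "r0 > 2 * m" and y: "\<bar>y\<bar> < r0 - m" and r: "r > r0" and th: "0 \<le> \<theta>" "\<theta> \<le> pi"
  defines "x \<equiv> r / m - 1" and "p \<equiv> weyl_of m r \<theta>"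
  shows "y \<noteq> m \<Longrightarrow> exp (- Zs m y p) = expmZ_formula m y x \<theta>"
    and "y = m \<Longrightarrow> exp (- Zs m y p) = sqrt (x\<^sup>2 - 1) / (x - cos \<theta>)"
proof -
  note P = eval_point[OF m r0 r th, folded x_def p_def]
  have x1: "x > 1" by (fact P(2))
  have K: "sqrt (x\<^sup>2 - 1) > 0" using x1 by (simp add: power2_eq_square) (smt (verit) mult_less_cancel_left1)
  have hk: "hk m (sg m p) = ln (m * sqrt (x\<^sup>2 - 1))" unfolding P(6) by (rule hk_val[OF m x1])
  have mK: "m * sqrt (x\<^sup>2 - 1) > 0" using m K by simp
  {
    assume ym: "y \<noteq> m"
    have Np: "Nf m y p / (y - m) > 0" by (rule Np_ext[OF m r0 y P(1) ym])
    have "exp (- Zs m y p) = exp (ln (Nf m y p / (y - m)) - ln (m * sqrt (x\<^sup>2 - 1)))"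
      unfolding Zs_def hk using ym by simp
    also have "\<dots> = (Nf m y p / (y - m)) / (m * sqrt (x\<^sup>2 - 1))" using Np mK by (simp add: exp_diff)
    also have "Nf m y p = m * (y * x - m * cos \<theta> - Sroot m y x \<theta>)"
      unfolding Nf_def P(6,7) P(5)[of y] by (simp add: algebra_simps)
    finally have e: "exp (- Zs m y p) = m * (y * x - m * cos \<theta> - Sroot m y x \<theta>) / (y - m) / (m * sqrt (x\<^sup>2 - 1))" .
    have g: "\<And>A B C. m * A / B / (m * C) = A / (B * C)" using m
      by (case_tac "B = 0"; case_tac "C = 0") (simp_all add: field_simps)
    show "exp (- Zs m y p) = expmZ_formula m y x \<theta>" unfolding expmZ_formula_def e g ..
  }
  {
    assume ym: "y = m"
    have a: "R1 m p > 0" using P(3) m x1 by (smt (verit) cos_le_one mult_pos_pos)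
    have "exp (- Zs m y p) = exp (ln (m * sqrt (x\<^sup>2 - 1)) - ln (R1 m p))"
      unfolding Zs_def hk using ym by simp
    also have "\<dots> = (m * sqrt (x\<^sup>2 - 1)) / (m * (x - cos \<theta>))" using a mK P(3) by (simp add: exp_diff)
    finally show "exp (- Zs m y p) = sqrt (x\<^sup>2 - 1) / (x - cos \<theta>)" using m by simp
  }
qed

lemma Psi_rel:
  assumes x1: "x > 1"
  shows "Psi_formula m y x \<theta> = (expmZ_formula m y x \<theta>)\<^sup>2 * (x\<^sup>2 - 1) / ((x + 1)\<^sup>2 * Sroot m y x \<theta>)"
proof -
  have K2: "(sqrt (x\<^sup>2 - 1))\<^sup>2 = x\<^sup>2 - 1" using x1 by (simp add: power2_eq_square) (smt (verit) mult_less_cancel_left1)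
  have K0: "sqrt (x\<^sup>2 - 1) \<noteq> 0" using x1 by (simp add: power2_eq_square) (smt (verit) mult_less_cancel_left1)
  have g: "(N / (D * K))\<^sup>2 * Q / (E * S) = N\<^sup>2 / (D\<^sup>2 * E * S)" if K: "K \<noteq> 0" and KQ: "K\<^sup>2 = Q" for N D E S K Q :: real
  proof -
    have "(N / (D * K))\<^sup>2 * K\<^sup>2 = N\<^sup>2 / D\<^sup>2" using K by (cases "D = 0") (simp_all add: field_simps power2_eq_square)
    thus ?thesis unfolding KQ[symmetric] by (simp add: mult.assoc)
  qed
  show ?thesis unfolding Psi_formula_def expmZ_formula_def by (rule g[OF K0 K2, symmetric])
qed

lemma U0_val:
  assumes m: "m > 0" and x1: "x > 1" and sg: "sg m p = m * x"
  shows "exp (2 * U0 m p - 2 * b) = (x - 1) / (x + 1) * (exp (- b))\<^sup>2"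
proof -
  have q: "1 - 2 * m / (m + m * x) = (x - 1) / (x + 1)"
  proof -
    have h: "m + m * x > 0" using m x1 by (simp add: add_pos_pos)
    thus ?thesis using m x1 by (simp add: field_simps)
  qed
  have q0: "(x - 1) / (x + 1) > 0" using x1 by simp
  have "2 * U0 m p = ln ((x - 1) / (x + 1))" unfolding U0_eq hU_def sg q by simp
  hence "exp (2 * U0 m p - 2 * b) = (x - 1) / (x + 1) / exp (2 * b)" using q0 by (simp add: exp_diff)
  moreover have "(exp (- b))\<^sup>2 = inverse (exp (2 * b))"
    by (simp add: power2_eq_square exp_add[symmetric] exp_minus[symmetric])
  ultimately show ?thesis by (simp add: divide_inverse)
qed

lemma rat_form:
  fixes A S D Y K :: real
  assumes "D \<noteq> 0" "K \<noteq> 0" "A + S \<noteq> 0" "(A - S) * (A + S) = D * Y * K\<^sup>2"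
  shows "(A - S) / (D * K) = Y * K / (A + S)"
  using assms by (simp add: field_simps power2_eq_square)

lemma lim_m:
  assumes m: "m > 0" and x1: "x > 1"
  shows "((\<lambda>y'. expmZ_formula m y' x \<theta>) \<longlongrightarrow> sqrt (x\<^sup>2 - 1) / (x - cos \<theta>)) (at m)"
    and "((\<lambda>y'. Sroot m y' x \<theta>) \<longlongrightarrow> m * (x - cos \<theta>)) (at m)"
    and "Sroot m m x \<theta> = m * (x - cos \<theta>)"
proof -
  define c where "c = cos \<theta>"
  define s where "s = sin \<theta>"
  define K where "K = sqrt (x\<^sup>2 - 1)"
  define Ef where "Ef = (\<lambda>y'::real. m\<^sup>2 * x\<^sup>2 + y'\<^sup>2 - 2 * m * x * y' * c - m\<^sup>2 * s\<^sup>2)"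
  have cs: "s\<^sup>2 = 1 - c\<^sup>2" unfolding s_def c_def by (rule sin_squared_eq)
  have Sroot_eq: "\<And>y'. Sroot m y' x \<theta> = sqrt (Ef y')" by (simp add: Sroot_def Ef_def c_def s_def)
  have Efm: "Ef m = (m * (x - c))\<^sup>2" unfolding Ef_def cs by (simp add: power2_eq_square algebra_simps)
  have xc: "x - c > 0" using x1 cos_le_one[of \<theta>] unfolding c_def by linarith
  have Sm: "sqrt (Ef m) = m * (x - c)" unfolding Efm using m xc by simp
  have Efpos: "Ef m > 0" unfolding Efm using m xc by simp
  have K2: "K\<^sup>2 = x\<^sup>2 - 1" unfolding K_def using x1 by (simp add: power2_eq_square) (smt (verit) mult_less_cancel_left1)
  have K0: "K \<noteq> 0" unfolding K_def using x1 by (simp add: power2_eq_square) (smt (verit) mult_less_cancel_left1)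
  have tE: "(Ef \<longlongrightarrow> Ef m) (at m)" unfolding Ef_def by (intro tendsto_intros)
  have tS: "((\<lambda>y'. sqrt (Ef y')) \<longlongrightarrow> sqrt (Ef m)) (at m)" by (rule tendsto_real_sqrt[OF tE])
  show "((\<lambda>y'. Sroot m y' x \<theta>) \<longlongrightarrow> m * (x - cos \<theta>)) (at m)" using tS unfolding Sroot_eq Sm c_def .
  show "Sroot m m x \<theta> = m * (x - cos \<theta>)" unfolding Sroot_eq Sm c_def ..
  define den where "den = (\<lambda>y'. y' * x - m * c + sqrt (Ef y'))"
  have tden: "(den \<longlongrightarrow> den m) (at m)" unfolding den_def by (intro tendsto_intros tS)
  have denm: "den m = 2 * m * (x - c)" unfolding den_def Sm by (simp add: algebra_simps)
  have denpos: "den m > 0" unfolding denm using m xc by simp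
  have ev1: "eventually (\<lambda>y'. Ef y' > 0) (at m)" by (rule order_tendstoD(1)[OF tE Efpos])
  have ev2: "eventually (\<lambda>y'. den y' > 0) (at m)" by (rule order_tendstoD(1)[OF tden denpos])
  have ev3: "eventually (\<lambda>y'. y' \<noteq> m) (at m)" by (rule eventually_neq_at_within)
  have ev: "eventually (\<lambda>y'. (y' + m) * K / den y' = expmZ_formula m y' x \<theta>) (at m)"
    using ev1 ev2 ev3
  proof eventually_elim
    case (elim y')
    have S2: "(sqrt (Ef y'))\<^sup>2 = Ef y'" by (rule real_sqrt_pow2[OF less_imp_le[OF elim(1)]])
    have key: "(y' * x - m * c - sqrt (Ef y')) * (y' * x - m * c + sqrt (Ef y')) = (y' - m) * (y' + m) * K\<^sup>2"
    proof -
      have "(y' * x - m * c - sqrt (Ef y')) * (y' * x - m * c + sqrt (Ef y')) = (y' * x - m * c)\<^sup>2 - (sqrt (Ef y'))\<^sup>2"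
        by (simp add: power2_eq_square algebra_simps)
      also have "\<dots> = (y' - m) * (y' + m) * K\<^sup>2" unfolding S2 K2 unfolding Ef_def cs by (simp add: power2_eq_square algebra_simps)
      finally show ?thesis .
    qed
    have "expmZ_formula m y' x \<theta> = (y' * x - m * c - sqrt (Ef y')) / ((y' - m) * K)"
      unfolding expmZ_formula_def Sroot_eq K_def c_def ..
    also have "\<dots> = (y' + m) * K / (y' * x - m * c + sqrt (Ef y'))"
      by (rule rat_form[OF _ K0 _ key]) (use elim in \<open>simp_all add: den_def\<close>)
    finally show ?case unfolding den_def by simp
  qed
  have tl: "((\<lambda>y'. (y' + m) * K / den y') \<longlongrightarrow> (m + m) * K / den m) (at m)"
    by (intro tendsto_intros tden) (use denpos in simp)
  have "(m + m) * K / den m = sqrt (x\<^sup>2 - 1) / (x - cos \<theta>)" unfolding denm K_def c_def using m by simp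
  with tl have "((\<lambda>y'. (y' + m) * K / den y') \<longlongrightarrow> sqrt (x\<^sup>2 - 1) / (x - cos \<theta>)) (at m)" by simp
  thus "((\<lambda>y'. expmZ_formula m y' x \<theta>) \<longlongrightarrow> sqrt (x\<^sup>2 - 1) / (x - cos \<theta>)) (at m)"
    by (rule Lim_transform_eventually[OF _ ev])
qed

lemma psi_eq_aux:
  fixes x A S :: real assumes "x > 1"
  shows "(x - 1) / (x + 1) * A / S = A * (x\<^sup>2 - 1) / ((x + 1)\<^sup>2 * S)"
proof -
  have x0: "x + 1 > 0" using assms by simp
  have e: "x\<^sup>2 - 1 = (x - 1) * (x + 1)" by (simp add: power2_eq_square algebra_simps)
  have g: "\<And>u. u \<noteq> 0 \<Longrightarrow> (x - 1) / u * A / S = A * ((x - 1) * u) / (u\<^sup>2 * S)"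
    by (case_tac "S = 0") (simp_all add: field_simps power2_eq_square)
  show ?thesis unfolding e by (rule g) (use x0 in simp)
qed

theorem mainTheorem10:
  fixes m r0 :: real
  assumes "m > 0" and "r0 > 2 * m"
  defines "x0 \<equiv> r0 / m - 1"
  shows "\<forall>y. - m * x0 < y \<and> y < m * x0 \<longrightarrow>
     (\<exists>Z. solves_Z m (exterior m r0) y Z \<and> vanishes_at_infinity (exterior m r0) Z) \<and>
     (\<forall>Z. solves_Z m (exterior m r0) y Z \<and> vanishes_at_infinity (exterior m r0) Z \<longrightarrow>
        (\<forall>r \<theta>. r > r0 \<and> 0 \<le> \<theta> \<and> \<theta> \<le> pi \<longrightarrow>
          (let x = r / m - 1; p = weyl_of m r \<theta> in
            (y \<noteq> m \<longrightarrow> exp (- Z p) = expmZ_formula m y x \<theta>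
                       \<and> Psi_y m Z y p = Psi_formula m y x \<theta>) \<and>
            (y = m \<longrightarrow> ((\<lambda>y'. expmZ_formula m y' x \<theta>) \<longlongrightarrow> exp (- Z p)) (at m)
                       \<and> ((\<lambda>y'. Psi_formula m y' x \<theta>) \<longlongrightarrow> Psi_y m Z y p) (at m)) \<and>
            psi_y y p = 1 / Sroot m y x \<theta>)))"
proof (intro allI impI)
  note m = assms(1) and r0 = assms(2)
  fix y assume yr: "- m * x0 < y \<and> y < m * x0"
  have mx0: "m * x0 = r0 - m" unfolding x0_def using m by (simp add: field_simps)
  have y: "\<bar>y\<bar> < r0 - m" using yr mx0 by (simp add: abs_less_iff)
  have ZS: "solves_Z m (exterior m r0) y (Zs m y)" "vanishes_at_infinity (exterior m r0) (Zs m y)"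
    by (rule Zs_solves[OF m r0 y], rule Zs_vanish[OF m r0 y])
  show "(\<exists>Z. solves_Z m (exterior m r0) y Z \<and> vanishes_at_infinity (exterior m r0) Z) \<and>
     (\<forall>Z. solves_Z m (exterior m r0) y Z \<and> vanishes_at_infinity (exterior m r0) Z \<longrightarrow>
        (\<forall>r \<theta>. r > r0 \<and> 0 \<le> \<theta> \<and> \<theta> \<le> pi \<longrightarrow>
          (let x = r / m - 1; p = weyl_of m r \<theta> in
            (y \<noteq> m \<longrightarrow> exp (- Z p) = expmZ_formula m y x \<theta>
                       \<and> Psi_y m Z y p = Psi_formula m y x \<theta>) \<and>
            (y = m \<longrightarrow> ((\<lambda>y'. expmZ_formula m y' x \<theta>) \<longlongrightarrow> exp (- Z p)) (at m)
                       \<and> ((\<lambda>y'. Psi_formula m y' x \<theta>) \<longlongrightarrow> Psi_y m Z y p) (at m)) \<and>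
            psi_y y p = 1 / Sroot m y x \<theta>)))"
  proof (intro conjI allI impI)
    show "\<exists>Z. solves_Z m (exterior m r0) y Z \<and> vanishes_at_infinity (exterior m r0) Z" using ZS by blast
    fix Z r \<theta>
    assume Z: "solves_Z m (exterior m r0) y Z \<and> vanishes_at_infinity (exterior m r0) Z"
      and rt: "r > r0 \<and> 0 \<le> \<theta> \<and> \<theta> \<le> pi"
    have r: "r > r0" and th: "0 \<le> \<theta>" "\<theta> \<le> pi" using rt by auto
    define x where "x = r / m - 1"
    define p where "p = weyl_of m r \<theta>"
    note P = eval_point[OF m r0 r th, folded x_def p_def]
    have x1: "x > 1" by (fact P(2))
    have Zp: "Z p = Zs m y p" using unique_Z[OF m r0 _ _ ZS P(1)] Z by blast
    have D: "sqrt ((fst p)\<^sup>2 + (snd p - y)\<^sup>2) = Sroot m y x \<theta>" using P(5)[of y] unfolding R1_def .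
    have Psi: "Psi_y m Z y p = (x - 1) / (x + 1) * (exp (- Z p))\<^sup>2 / Sroot m y x \<theta>"
      unfolding Psi_y_def U0_val[OF m x1 P(6)] D ..
    have G1: "y \<noteq> m \<longrightarrow> exp (- Z p) = expmZ_formula m y x \<theta> \<and> Psi_y m Z y p = Psi_formula m y x \<theta>"
    proof
      assume ym: "y \<noteq> m"
      have E: "exp (- Z p) = expmZ_formula m y x \<theta>"
        using exp_mZ(1)[OF m r0 y r th ym, folded x_def p_def] Zp by simp
      have "Psi_y m Z y p = Psi_formula m y x \<theta>"
        unfolding Psi E Psi_rel[OF x1] by (rule psi_eq_aux[OF x1])
      with E show "exp (- Z p) = expmZ_formula m y x \<theta> \<and> Psi_y m Z y p = Psi_formula m y x \<theta>" by simp
    qed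
    have G2: "y = m \<longrightarrow> ((\<lambda>y'. expmZ_formula m y' x \<theta>) \<longlongrightarrow> exp (- Z p)) (at m)
                       \<and> ((\<lambda>y'. Psi_formula m y' x \<theta>) \<longlongrightarrow> Psi_y m Z y p) (at m)"
    proof
      assume ym: "y = m"
      have E: "exp (- Z p) = sqrt (x\<^sup>2 - 1) / (x - cos \<theta>)"
        using exp_mZ(2)[OF m r0 y r th ym, folded x_def p_def] Zp by simp
      note L = lim_m[OF m x1, of \<theta>]
      have t1: "((\<lambda>y'. expmZ_formula m y' x \<theta>) \<longlongrightarrow> exp (- Z p)) (at m)" unfolding E by (rule L(1))
      have Sm0: "m * (x - cos \<theta>) \<noteq> 0" using m x1 cos_le_one[of \<theta>] by (smt (verit) mult_pos_pos)
      have t2: "((\<lambda>y'. (expmZ_formula m y' x \<theta>)\<^sup>2 * (x\<^sup>2 - 1) / ((x + 1)\<^sup>2 * Sroot m y' x \<theta>)) \<longlongrightarrow>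
          (exp (- Z p))\<^sup>2 * (x\<^sup>2 - 1) / ((x + 1)\<^sup>2 * (m * (x - cos \<theta>)))) (at m)"
        by (intro tendsto_intros t1 L(2)) (use Sm0 x1 in simp)
      have "Psi_y m Z y p = (exp (- Z p))\<^sup>2 * (x\<^sup>2 - 1) / ((x + 1)\<^sup>2 * (m * (x - cos \<theta>)))"
        unfolding Psi unfolding ym L(3) by (rule psi_eq_aux[OF x1])
      moreover have "(\<lambda>y'. Psi_formula m y' x \<theta>) = (\<lambda>y'. (expmZ_formula m y' x \<theta>)\<^sup>2 * (x\<^sup>2 - 1) / ((x + 1)\<^sup>2 * Sroot m y' x \<theta>))"
        using Psi_rel[OF x1] by blast
      ultimately have t3: "((\<lambda>y'. Psi_formula m y' x \<theta>) \<longlongrightarrow> Psi_y m Z y p) (at m)" using t2 by simp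
      show "((\<lambda>y'. expmZ_formula m y' x \<theta>) \<longlongrightarrow> exp (- Z p)) (at m)
                       \<and> ((\<lambda>y'. Psi_formula m y' x \<theta>) \<longlongrightarrow> Psi_y m Z y p) (at m)" using t1 t3 by simp
    qed
    have G3: "psi_y y p = 1 / Sroot m y x \<theta>" unfolding psi_y_def D ..
    show "let x = r / m - 1; p = weyl_of m r \<theta> in
            (y \<noteq> m \<longrightarrow> exp (- Z p) = expmZ_formula m y x \<theta>
                       \<and> Psi_y m Z y p = Psi_formula m y x \<theta>) \<and>
            (y = m \<longrightarrow> ((\<lambda>y'. expmZ_formula m y' x \<theta>) \<longlongrightarrow> exp (- Z p)) (at m)
                       \<and> ((\<lambda>y'. Psi_formula m y' x \<theta>) \<longlongrightarrow> Psi_y m Z y p) (at m)) \<and>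
            psi_y y p = 1 / Sroot m y x \<theta>"
      unfolding Let_def x_def[symmetric] p_def[symmetric] using G1 G2 G3 by blast
  qed
qed

end
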